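(* Let $(H,\mu_H,\Delta_H,\alpha_H)$ be a Hom-bialgebra and $(A,\mu_A,\alpha_A)$ a left $H$-module Hom-algebra with action $h\otimes a\mapsto h\cdot a$, with $\alpha_H,\alpha_A$ bijective. Then the Hom-smash product $A\# H$ is a right $H$-comodule Hom-algebra via $\rho_{A\# H}:A\# H\to(A\# H)\otimes H$, $\rho_{A\# H}(a\# h)=(\alpha_A(a)\# h_1)\otimes h_2$.
   Context: Over a field $k$, no (co)units assumed; $\Delta(h)=h_1\otimes h_2$. A Hom-associative algebra is $(A,\mu,\alpha)$ with $\alpha(aa')=\alpha(a)\alpha(a')$, $\alpha(a)(a'a'')=(aa')\alpha(a'')$; a morphism $f$ of Hom-associative algebras satisfies $\alpha_B\circ f=f\circ\alpha_A$, $f\circ\mu_A=\mu_B\circ(f\otimes f)$; the tensor product of Hom-associative algebras has componentwise product and structure map. A Hom-bialgebra $(H,\mu,\Delta,\alpha)$: $(H,\mu,\alpha)$ Hom-associative, $\Delta(h_1)\otimes\alpha(h_2)=\alpha(h_1)\otimes\Delta(h_2)$, $\Delta(hh')=h_1h'_1\otimes h_2h'_2$, $\Delta(\alpha(h))=\alpha(h_1)\otimes\alpha(h_2)$. A left $H$-module Hom-algebra is a Hom-associative $(A,\mu_A,\alpha_A)$ with action satisfying $\alpha_A(h\cdot a)=\alpha_H(h)\cdot\alpha_A(a)$, $\alpha_H(h)\cdot(h'\cdot a)=(hh')\cdot\alpha_A(a)$, $\alpha_H^2(h)\cdot(aa')=(h_1\cdot a)(h_2\cdot a')$. The Hom-smash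 product $A\# H$ is $A\otimes H$ with structure map $\alpha_A\otimes\alpha_H$ and product $(a\# h)(a'\# h')=a(\alpha_H^{-2}(h_1)\cdot\alpha_A^{-1}(a'))\#\alpha_H^{-1}(h_2)h'$, a Hom-associative algebra. A right $H$-comodule structure on $(M,\alpha_M)$ is a linear $\rho:M\to M\otimes H$ with $(\alpha_M\otimes\alpha_H)\circ\rho=\rho\circ\alpha_M$ and $(\alpha_M\otimes\Delta_H)\circ\rho=(\rho\otimes\alpha_H)\circ\rho$. A right $H$-comodule Hom-algebra is a Hom-associative algebra $(D,\mu_D,\alpha_D)$ with a right $H$-comodule structure $\rho_D:D\to D\otimes H$ that is a morphism of Hom-associative algebras (to the tensor product $D\otimes H$). *)

theory Defs
  imports Main
begin

record ('k, 'a) vs =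
  vcar :: "'a set"
  vadd :: "'a \<Rightarrow> 'a \<Rightarrow> 'a"
  vzero :: "'a"
  vsc :: "'k \<Rightarrow> 'a \<Rightarrow> 'a"

definition is_vs :: "('k::field, 'a) vs \<Rightarrow> bool" where
  "is_vs V \<longleftrightarrow>
     vzero V \<in> vcar V \<and>
     (\<forall>x\<in>vcar V. \<forall>y\<in>vcar V. vadd V x y \<in> vcar V) \<and>
     (\<forall>c. \<forall>x\<in>vcar V. vsc V c x \<in> vcar V) \<and>
     (\<forall>x\<in>vcar V. \<forall>y\<in>vcar V. \<forall>z\<in>vcar V. vadd V (vadd V x y) z = vadd V x (vadd V y z)) \<and>
     (\<forall>x\<in>vcar V. \<forall>y\<in>vcar V. vadd V x y = vadd V y x) \<and>
     (\<forall>x\<in>vcar V. vadd V (vzero V) x = x) \<and>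
     (\<forall>x\<in>vcar V. \<exists>y\<in>vcar V. vadd V x y = vzero V) \<and>
     (\<forall>c. \<forall>x\<in>vcar V. \<forall>y\<in>vcar V. vsc V c (vadd V x y) = vadd V (vsc V c x) (vsc V c y)) \<and>
     (\<forall>c d. \<forall>x\<in>vcar V. vsc V (c + d) x = vadd V (vsc V c x) (vsc V d x)) \<and>
     (\<forall>c d. \<forall>x\<in>vcar V. vsc V c (vsc V d x) = vsc V (c * d) x) \<and>
     (\<forall>x\<in>vcar V. vsc V 1 x = x)"

definition linear_map :: "('k::field, 'a) vs \<Rightarrow> ('k, 'b) vs \<Rightarrow> ('a \<Rightarrow> 'b) \<Rightarrow> bool" where
  "linear_map V W f \<longleftrightarrow>
     (\<forall>x\<in>vcar V. f x \<in> vcar W) \<and>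
     (\<forall>x\<in>vcar V. \<forall>y\<in>vcar V. f (vadd V x y) = vadd W (f x) (f y)) \<and>
     (\<forall>c. \<forall>x\<in>vcar V. f (vsc V c x) = vsc W c (f x))"

definition bilinear_map ::
  "('k::field, 'a) vs \<Rightarrow> ('k, 'b) vs \<Rightarrow> ('k, 'c) vs \<Rightarrow> ('a \<Rightarrow> 'b \<Rightarrow> 'c) \<Rightarrow> bool" where
  "bilinear_map V W U f \<longleftrightarrow>
     (\<forall>y\<in>vcar W. linear_map V U (\<lambda>x. f x y)) \<and>
     (\<forall>x\<in>vcar V. linear_map W U (\<lambda>y. f x y))"

section \<open>Tensor product V \<otimes> W: formal sums of pairs modulo the bilinearity relations\<close>

definition delta :: "'x \<Rightarrow> 'x \<Rightarrow> 'k::field" where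
  "delta p = (\<lambda>q. if q = p then 1 else 0)"

inductive_set trel :: "('k::field, 'a) vs \<Rightarrow> ('k, 'b) vs \<Rightarrow> ('a \<times> 'b \<Rightarrow> 'k) set"
  for V :: "('k, 'a) vs" and W :: "('k, 'b) vs" where
  zero: "(\<lambda>_. 0) \<in> trel V W"
| addl: "\<lbrakk>v \<in> vcar V; v' \<in> vcar V; w \<in> vcar W\<rbrakk> \<Longrightarrow>
     (\<lambda>p. delta (vadd V v v', w) p - delta (v, w) p - delta (v', w) p) \<in> trel V W"
| addr: "\<lbrakk>v \<in> vcar V; w \<in> vcar W; w' \<in> vcar W\<rbrakk> \<Longrightarrow>
     (\<lambda>p. delta (v, vadd W w w') p - delta (v, w) p - delta (v, w') p) \<in> trel V W"
| scl: "\<lbrakk>v \<in> vcar V; w \<in> vcar W\<rbrakk> \<Longrightarrow>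
     (\<lambda>p. delta (vsc V c v, w) p - c * delta (v, w) p) \<in> trel V W"
| scr: "\<lbrakk>v \<in> vcar V; w \<in> vcar W\<rbrakk> \<Longrightarrow>
     (\<lambda>p. delta (v, vsc W c w) p - c * delta (v, w) p) \<in> trel V W"
| sum: "\<lbrakk>f \<in> trel V W; g \<in> trel V W\<rbrakk> \<Longrightarrow> (\<lambda>p. f p + g p) \<in> trel V W"
| smul: "f \<in> trel V W \<Longrightarrow> (\<lambda>p. c * f p) \<in> trel V W"

text \<open>A list of pairs represents the formal sum of its entries (scalars are absorbed into the first factor).\<close>
definition fsum :: "('a \<times> 'b) list \<Rightarrow> ('a \<times> 'b \<Rightarrow> 'k::field)" where
  "fsum xs = (\<lambda>p. of_nat (count_list xs p))"

definition teq :: "('k::field, 'a) vs \<Rightarrow> ('k, 'b) vs \<Rightarrow> ('a \<times> 'b) list \<Rightarrow> ('a \<times> 'b) list \<Rightarrow> bool" where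
  "teq V W xs ys \<longleftrightarrow> set xs \<subseteq> vcar V \<times> vcar W \<and> set ys \<subseteq> vcar V \<times> vcar W \<and>
     (\<lambda>p. (fsum xs p :: 'k) - fsum ys p) \<in> trel V W"

definition tclass :: "('k::field, 'a) vs \<Rightarrow> ('k, 'b) vs \<Rightarrow> ('a \<times> 'b) list \<Rightarrow> ('a \<times> 'b) list set" where
  "tclass V W xs = {ys. teq V W xs ys}"

definition trep :: "('a \<times> 'b) list set \<Rightarrow> ('a \<times> 'b) list" where
  "trep t = (SOME xs. xs \<in> t)"

definition tsp :: "('k::field, 'a) vs \<Rightarrow> ('k, 'b) vs \<Rightarrow> ('k, ('a \<times> 'b) list set) vs" where
  "tsp V W = \<lparr> vcar = {tclass V W xs | xs. set xs \<subseteq> vcar V \<times> vcar W},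
               vadd = (\<lambda>s t. tclass V W (trep s @ trep t)),
               vzero = tclass V W [],
               vsc = (\<lambda>c t. tclass V W (map (\<lambda>(v, w). (vsc V c v, w)) (trep t))) \<rparr>"

definition tens :: "('k::field, 'a) vs \<Rightarrow> ('k, 'b) vs \<Rightarrow> 'a \<Rightarrow> 'b \<Rightarrow> ('a \<times> 'b) list set" where
  "tens V W v w = tclass V W [(v, w)]"

definition tlift :: "('k, 'c) vs \<Rightarrow> ('a \<Rightarrow> 'b \<Rightarrow> 'c) \<Rightarrow> ('a \<times> 'b) list set \<Rightarrow> 'c" where
  "tlift U f t = foldr (\<lambda>(v, w) acc. vadd U (f v w) acc) (trep t) (vzero U)"

definition tmap :: "('k::field, 'c) vs \<Rightarrow> ('k, 'd) vs \<Rightarrow> ('a \<Rightarrow> 'c) \<Rightarrow> ('b \<Rightarrow> 'd)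
    \<Rightarrow> ('a \<times> 'b) list set \<Rightarrow> ('c \<times> 'd) list set" where
  "tmap V' W' f g t = tlift (tsp V' W') (\<lambda>v w. tens V' W' (f v) (g w)) t"

definition tassoc :: "('k::field, 'u) vs \<Rightarrow> ('k, 'v) vs \<Rightarrow> ('k, 'w) vs
    \<Rightarrow> ((('u \<times> 'v) list set) \<times> 'w) list set \<Rightarrow> ('u \<times> (('v \<times> 'w) list set)) list set" where
  "tassoc U V W t = tlift (tsp U (tsp V W))
     (\<lambda>x w. tlift (tsp U (tsp V W)) (\<lambda>u v. tens U (tsp V W) u (tens V W v w)) x) t"

definition tmul :: "('k::field, 'a) vs \<Rightarrow> ('k, 'b) vs \<Rightarrow> ('a \<Rightarrow> 'a \<Rightarrow> 'a) \<Rightarrow> ('b \<Rightarrow> 'b \<Rightarrow> 'b)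
    \<Rightarrow> ('a \<times> 'b) list set \<Rightarrow> ('a \<times> 'b) list set \<Rightarrow> ('a \<times> 'b) list set" where
  "tmul D E mu nu t t' = tlift (tsp D E)
     (\<lambda>d e. tlift (tsp D E) (\<lambda>d' e'. tens D E (mu d d') (nu e e')) t') t"

definition hom_assoc :: "('k::field, 'a) vs \<Rightarrow> ('a \<Rightarrow> 'a \<Rightarrow> 'a) \<Rightarrow> ('a \<Rightarrow> 'a) \<Rightarrow> bool" where
  "hom_assoc V mu al \<longleftrightarrow> is_vs V \<and> bilinear_map V V V mu \<and> linear_map V V al \<and>
     (\<forall>x\<in>vcar V. \<forall>y\<in>vcar V. al (mu x y) = mu (al x) (al y)) \<and>
     (\<forall>x\<in>vcar V. \<forall>y\<in>vcar V. \<forall>z\<in>vcar V. mu (al x) (mu y z) = mu (mu x y) (al z))"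

definition hom_alg_mor :: "('k::field, 'a) vs \<Rightarrow> ('a \<Rightarrow> 'a \<Rightarrow> 'a) \<Rightarrow> ('a \<Rightarrow> 'a)
    \<Rightarrow> ('k, 'b) vs \<Rightarrow> ('b \<Rightarrow> 'b \<Rightarrow> 'b) \<Rightarrow> ('b \<Rightarrow> 'b) \<Rightarrow> ('a \<Rightarrow> 'b) \<Rightarrow> bool" where
  "hom_alg_mor V mu al W mu' al' f \<longleftrightarrow> linear_map V W f \<and>
     (\<forall>x\<in>vcar V. al' (f x) = f (al x)) \<and>
     (\<forall>x\<in>vcar V. \<forall>y\<in>vcar V. f (mu x y) = mu' (f x) (f y))"

definition hom_bialg :: "('k::field, 'h) vs \<Rightarrow> ('h \<Rightarrow> 'h \<Rightarrow> 'h)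
    \<Rightarrow> ('h \<Rightarrow> ('h \<times> 'h) list set) \<Rightarrow> ('h \<Rightarrow> 'h) \<Rightarrow> bool" where
  "hom_bialg H mu De al \<longleftrightarrow> hom_assoc H mu al \<and> linear_map H (tsp H H) De \<and>
     (\<forall>h\<in>vcar H. tassoc H H H (tmap (tsp H H) H De al (De h)) = tmap H (tsp H H) al De (De h)) \<and>
     (\<forall>h\<in>vcar H. \<forall>h'\<in>vcar H. De (mu h h') = tmul H H mu mu (De h) (De h')) \<and>
     (\<forall>h\<in>vcar H. De (al h) = tmap H H al al (De h))"

definition module_hom_alg :: "('k::field, 'h) vs \<Rightarrow> ('h \<Rightarrow> 'h \<Rightarrow> 'h)
    \<Rightarrow> ('h \<Rightarrow> ('h \<times> 'h) list set) \<Rightarrow> ('h \<Rightarrow> 'h)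
    \<Rightarrow> ('k, 'a) vs \<Rightarrow> ('a \<Rightarrow> 'a \<Rightarrow> 'a) \<Rightarrow> ('a \<Rightarrow> 'a) \<Rightarrow> ('h \<Rightarrow> 'a \<Rightarrow> 'a) \<Rightarrow> bool" where
  "module_hom_alg H muH De alH A muA alA act \<longleftrightarrow> hom_assoc A muA alA \<and>
     bilinear_map H A A act \<and>
     (\<forall>h\<in>vcar H. \<forall>a\<in>vcar A. alA (act h a) = act (alH h) (alA a)) \<and>
     (\<forall>h\<in>vcar H. \<forall>h'\<in>vcar H. \<forall>a\<in>vcar A. act (alH h) (act h' a) = act (muH h h') (alA a)) \<and>
     (\<forall>h\<in>vcar H. \<forall>a\<in>vcar A. \<forall>a'\<in>vcar A.
        act (alH (alH h)) (muA a a') = tlift A (\<lambda>x y. muA (act x a) (act y a')) (De h))"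

definition comodule :: "('k::field, 'm) vs \<Rightarrow> ('m \<Rightarrow> 'm) \<Rightarrow> ('k, 'h) vs
    \<Rightarrow> ('h \<Rightarrow> ('h \<times> 'h) list set) \<Rightarrow> ('h \<Rightarrow> 'h) \<Rightarrow> ('m \<Rightarrow> ('m \<times> 'h) list set) \<Rightarrow> bool" where
  "comodule M alM H De alH rho \<longleftrightarrow> linear_map M (tsp M H) rho \<and>
     (\<forall>m\<in>vcar M. tmap M H alM alH (rho m) = rho (alM m)) \<and>
     (\<forall>m\<in>vcar M. tmap M (tsp H H) alM De (rho m) = tassoc M H H (tmap (tsp M H) H rho alH (rho m)))"

definition comodule_hom_alg :: "('k::field, 'd) vs \<Rightarrow> ('d \<Rightarrow> 'd \<Rightarrow> 'd) \<Rightarrow> ('d \<Rightarrow> 'd)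
    \<Rightarrow> ('k, 'h) vs \<Rightarrow> ('h \<Rightarrow> 'h \<Rightarrow> 'h) \<Rightarrow> ('h \<Rightarrow> ('h \<times> 'h) list set) \<Rightarrow> ('h \<Rightarrow> 'h)
    \<Rightarrow> ('d \<Rightarrow> ('d \<times> 'h) list set) \<Rightarrow> bool" where
  "comodule_hom_alg D muD alD H muH De alH rho \<longleftrightarrow> hom_assoc D muD alD \<and>
     comodule D alD H De alH rho \<and>
     hom_alg_mor D muD alD (tsp D H) (tmul D H muD muH) (tmap D H alD alH) rho"

definition smash_mult :: "('k::field, 'a) vs \<Rightarrow> ('k, 'h) vs \<Rightarrow> ('a \<Rightarrow> 'a \<Rightarrow> 'a) \<Rightarrow> ('a \<Rightarrow> 'a)
    \<Rightarrow> ('h \<Rightarrow> 'h \<Rightarrow> 'h) \<Rightarrow> ('h \<Rightarrow> ('h \<times> 'h) list set) \<Rightarrow> ('h \<Rightarrow> 'h) \<Rightarrow> ('h \<Rightarrow> 'a \<Rightarrow> 'a)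
    \<Rightarrow> ('a \<times> 'h) list set \<Rightarrow> ('a \<times> 'h) list set \<Rightarrow> ('a \<times> 'h) list set" where
  "smash_mult A H muA alA muH De alH act t t' =
     (let iA = the_inv_into (vcar A) alA; iH = the_inv_into (vcar H) alH in
      tlift (tsp A H) (\<lambda>a h. tlift (tsp A H) (\<lambda>a' h'.
        tlift (tsp A H) (\<lambda>x y. tens A H (muA a (act (iH (iH x)) (iA a'))) (muH (iH y) h')) (De h)) t') t)"

definition smash_rho :: "('k::field, 'a) vs \<Rightarrow> ('k, 'h) vs \<Rightarrow> ('a \<Rightarrow> 'a)
    \<Rightarrow> ('h \<Rightarrow> ('h \<times> 'h) list set) \<Rightarrow> ('a \<times> 'h) list set \<Rightarrow> ((('a \<times> 'h) list set) \<times> 'h) list set" where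
  "smash_rho A H alA De t = tlift (tsp (tsp A H) H)
     (\<lambda>a h. tlift (tsp (tsp A H) H) (\<lambda>x y. tens (tsp A H) H (tens A H (alA a) x) y) (De h)) t"

end

theory Submission
  imports Defs "HOL-Algebra.Ring"
begin

definition vR :: "('k::field, 'a) vs \<Rightarrow> 'a ring" where
  "vR V = \<lparr>carrier = vcar V, mult = (\<lambda>x y. x), one = vzero V, zero = vzero V, add = vadd V\<rparr>"

lemma vR_simps[simp]: "carrier (vR V) = vcar V" "add (vR V) = vadd V" "zero (vR V) = vzero V"
  by (simp_all add: vR_def)

context fixes V :: "('k::field, 'a) vs" assumes V: "is_vs V"
begin

lemma vs_zero[simp]: "vzero V \<in> vcar V" using V by (simp add: is_vs_def)
lemma vs_add[simp]: "x \<in> vcar V \<Longrightarrow> y \<in> vcar V \<Longrightarrow> vadd V x y \<in> vcar V" using V by (simp add: is_vs_def)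
lemma vs_sc[simp]: "x \<in> vcar V \<Longrightarrow> vsc V c x \<in> vcar V" using V by (simp add: is_vs_def)
lemma vs_assoc: "x \<in> vcar V \<Longrightarrow> y \<in> vcar V \<Longrightarrow> z \<in> vcar V \<Longrightarrow> vadd V (vadd V x y) z = vadd V x (vadd V y z)"
  using V unfolding is_vs_def by blast
lemma vs_comm: "x \<in> vcar V \<Longrightarrow> y \<in> vcar V \<Longrightarrow> vadd V x y = vadd V y x"
  using V unfolding is_vs_def by blast
lemma vs_lzero[simp]: "x \<in> vcar V \<Longrightarrow> vadd V (vzero V) x = x" using V unfolding is_vs_def by blast
lemma vs_rzero[simp]: "x \<in> vcar V \<Longrightarrow> vadd V x (vzero V) = x" using vs_comm vs_lzero vs_zero by metis
lemma vs_sc_add: "x \<in> vcar V \<Longrightarrow> y \<in> vcar V \<Longrightarrow> vsc V c (vadd V x y) = vadd V (vsc V c x) (vsc V c y)"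
  using V by (simp add: is_vs_def)
lemma vs_add_sc: "x \<in> vcar V \<Longrightarrow> vsc V (c + d) x = vadd V (vsc V c x) (vsc V d x)"
  using V by (simp add: is_vs_def)
lemma vs_sc_sc: "x \<in> vcar V \<Longrightarrow> vsc V c (vsc V d x) = vsc V (c * d) x"
  using V by (simp add: is_vs_def)
lemma vs_one[simp]: "x \<in> vcar V \<Longrightarrow> vsc V 1 x = x"
  using V by (simp add: is_vs_def)

lemma vs_inv: "x \<in> vcar V \<Longrightarrow> \<exists>y\<in>vcar V. vadd V x y = vzero V"
  using V unfolding is_vs_def by blast

lemma vs_cancel: "x \<in> vcar V \<Longrightarrow> y \<in> vcar V \<Longrightarrow> z \<in> vcar V \<Longrightarrow> vadd V x y = vadd V x z \<Longrightarrow> y = z"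
proof -
  assume x: "x \<in> vcar V" and y: "y \<in> vcar V" and z: "z \<in> vcar V" and e: "vadd V x y = vadd V x z"
  obtain x' where x': "x' \<in> vcar V" "vadd V x x' = vzero V" using vs_inv[OF x] by blast
  have "y = vadd V (vadd V x' x) y" using x' x y vs_comm by simp
  also have "\<dots> = vadd V x' (vadd V x z)" using x x' y e vs_assoc by simp
  also have "\<dots> = z" using x x' z vs_assoc vs_comm by (metis vs_lzero)
  finally show ?thesis .
qed

lemma vs_sc0[simp]: "x \<in> vcar V \<Longrightarrow> vsc V 0 x = vzero V"
proof -
  assume x: "x \<in> vcar V"
  have "vadd V (vsc V 0 x) (vsc V 0 x) = vadd V (vsc V 0 x) (vzero V)"
    using vs_add_sc[OF x, of 0 0] x by simp
  thus ?thesis using vs_cancel x by (meson vs_sc vs_zero)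
qed

lemma vs_sc_zero[simp]: "vsc V c (vzero V) = vzero V"
  using vs_sc_sc[of "vzero V" c 0] by simp

lemma vs_neg: "x \<in> vcar V \<Longrightarrow> vadd V x (vsc V (-1) x) = vzero V"
  using vs_add_sc[of x 1 "-1"] by simp

lemma vs_sc_neg_eq: "x \<in> vcar V \<Longrightarrow> y \<in> vcar V \<Longrightarrow> vadd V x (vsc V (-1) y) = vzero V \<Longrightarrow> x = y"
  by (metis vs_assoc vs_comm vs_lzero vs_neg vs_sc vs_rzero)

lemma vs_ag: "abelian_group (vR V)"
  apply (rule abelian_groupI)
       apply (simp_all add: vs_assoc)
   apply (simp add: vs_comm)
  using vs_neg vs_comm vs_sc by metis

end


definition lsum :: "('k::field, 'c) vs \<Rightarrow> ('a \<Rightarrow> 'b \<Rightarrow> 'c) \<Rightarrow> ('a \<times> 'b) list \<Rightarrow> 'c" where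
  "lsum U f xs = foldr (\<lambda>(v, w) acc. vadd U (f v w) acc) xs (vzero U)"

lemma lsum_simps[simp]: "lsum U f [] = vzero U" "lsum U f (x # xs) = vadd U (f (fst x) (snd x)) (lsum U f xs)"
  by (simp_all add: lsum_def split: prod.split)

lemma tlift_lsum: "tlift U f t = lsum U f (trep t)"
  by (simp add: tlift_def lsum_def)

definition supp :: "('x \<Rightarrow> 'k::field) \<Rightarrow> 'x set" where "supp \<phi> = {p. \<phi> p \<noteq> 0}"

definition gterm :: "('k::field, 'c) vs \<Rightarrow> ('a \<Rightarrow> 'b \<Rightarrow> 'c) \<Rightarrow> ('a \<times> 'b \<Rightarrow> 'k) \<Rightarrow> 'a \<times> 'b \<Rightarrow> 'c" where
  "gterm U f \<phi> p = vsc U (\<phi> p) (f (fst p) (snd p))"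

lemma bilD:
  assumes "bilinear_map V W U f"
  shows "v \<in> vcar V \<Longrightarrow> w \<in> vcar W \<Longrightarrow> f v w \<in> vcar U"
    and "v \<in> vcar V \<Longrightarrow> v' \<in> vcar V \<Longrightarrow> w \<in> vcar W \<Longrightarrow> f (vadd V v v') w = vadd U (f v w) (f v' w)"
    and "v \<in> vcar V \<Longrightarrow> w \<in> vcar W \<Longrightarrow> w' \<in> vcar W \<Longrightarrow> f v (vadd W w w') = vadd U (f v w) (f v w')"
    and "v \<in> vcar V \<Longrightarrow> w \<in> vcar W \<Longrightarrow> f (vsc V c v) w = vsc U c (f v w)"
    and "v \<in> vcar V \<Longrightarrow> w \<in> vcar W \<Longrightarrow> f v (vsc W c w) = vsc U c (f v w)"
  using assms unfolding bilinear_map_def linear_map_def by auto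

context
  fixes V :: "('k::field, 'a) vs" and W :: "('k, 'b) vs" and U :: "('k, 'c) vs" and f
  assumes V: "is_vs V" and W: "is_vs W" and U: "is_vs U" and f: "bilinear_map V W U f"
begin

interpretation U: abelian_group "vR U" by (rule vs_ag[OF U])

lemmas Us[simp] = vs_sc[OF U] vs_add[OF U] vs_zero[OF U] vs_sc0[OF U] vs_sc_zero[OF U] vs_one[OF U]
  vs_lzero[OF U] vs_rzero[OF U]
lemmas Vs[simp] = vs_sc[OF V] vs_add[OF V] vs_zero[OF V]
lemmas Ws[simp] = vs_sc[OF W] vs_add[OF W] vs_zero[OF W]
lemmas fc[simp] = bilD(1)[OF f]

lemma gterm_Pi: "Q \<subseteq> vcar V \<times> vcar W \<Longrightarrow> gterm U f \<phi> \<in> Q \<rightarrow> carrier (vR U)"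
  using bilD(1)[OF f] vs_sc[OF U] by (auto simp: gterm_def)

lemma finsum_single: "q \<in> vcar V \<times> vcar W \<Longrightarrow> finsum (vR U) (gterm U f \<phi>) {q} = gterm U f \<phi> q"
  using U.finsum_insert[of "{}" q "gterm U f \<phi>"] gterm_Pi[of "{q}"]
  by (auto simp: gterm_def)

lemma Lsum_mono:
  assumes "finite Q" "Q \<subseteq> vcar V \<times> vcar W" "supp \<phi> \<subseteq> P" "P \<subseteq> Q"
  shows "finsum (vR U) (gterm U f \<phi>) Q = finsum (vR U) (gterm U f \<phi>) P"
proof -
  have fP: "finite P" using assms finite_subset by blast
  have Q: "Q = P \<union> (Q - P)" using assms by blast
  have QP: "Q - P \<subseteq> vcar V \<times> vcar W" "P \<subseteq> vcar V \<times> vcar W" using assms by auto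
  have "finsum (vR U) (gterm U f \<phi>) (Q - P) = finsum (vR U) (\<lambda>_. zero (vR U)) (Q - P)"
    apply (rule U.finsum_cong'[OF refl])
     apply simp
    subgoal for p
    proof -
      assume p: "p \<in> Q - P"
      then have "\<phi> p = 0" using assms(3) by (auto simp: supp_def)
      moreover have "fst p \<in> vcar V" "snd p \<in> vcar W" using p assms(2) by auto
      ultimately show ?thesis by (simp add: gterm_def)
    qed
    done
  also have "\<dots> = zero (vR U)" by (rule U.finsum_zero)
  finally have z: "finsum (vR U) (gterm U f \<phi>) (Q - P) = zero (vR U)" .
  have "finsum (vR U) (gterm U f \<phi>) Q = finsum (vR U) (gterm U f \<phi>) (P \<union> (Q - P))" using Q by simp
  also have "\<dots> = add (vR U) (finsum (vR U) (gterm U f \<phi>) P) (finsum (vR U) (gterm U f \<phi>) (Q - P))"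
    apply (rule U.finsum_Un_disjoint)
    using assms fP gterm_Pi[OF QP(2), of \<phi>] gterm_Pi[OF QP(1), of \<phi>] by auto
  also have "\<dots> = finsum (vR U) (gterm U f \<phi>) P" using z U.finsum_closed[OF gterm_Pi[OF QP(2)]] by simp
  finally show ?thesis .
qed

lemma Lsum_add:
  assumes "finite Q" "Q \<subseteq> vcar V \<times> vcar W"
  shows "finsum (vR U) (gterm U f (\<lambda>p. \<phi> p + \<psi> p)) Q
       = vadd U (finsum (vR U) (gterm U f \<phi>) Q) (finsum (vR U) (gterm U f \<psi>) Q)"
proof -
  have "finsum (vR U) (gterm U f (\<lambda>p. \<phi> p + \<psi> p)) Q
      = finsum (vR U) (\<lambda>p. add (vR U) (gterm U f \<phi> p) (gterm U f \<psi> p)) Q"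
    apply (rule U.finsum_cong'[OF refl])
    subgoal using assms by (auto simp: gterm_def Pi_def)
    subgoal for p using assms vs_add_sc[OF U] by (cases p) (auto simp: gterm_def)
    done
  also have "\<dots> = add (vR U) (finsum (vR U) (gterm U f \<phi>) Q) (finsum (vR U) (gterm U f \<psi>) Q)"
    by (rule U.finsum_addf) (use gterm_Pi[OF assms(2)] in auto)
  finally show ?thesis by simp
qed

lemma Lsum_sc:
  assumes "finite Q" "Q \<subseteq> vcar V \<times> vcar W"
  shows "finsum (vR U) (gterm U f (\<lambda>p. c * \<phi> p)) Q = vsc U c (finsum (vR U) (gterm U f \<phi>) Q)"
  using assms
proof (induction Q rule: finite_induct)
  case empty
  then show ?case by simp
next
  case (insert x F)
  have xc: "x \<in> vcar V \<times> vcar W" and Fc: "F \<subseteq> vcar V \<times> vcar W" using insert by auto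
  have gx: "gterm U f (\<lambda>p. c * \<phi> p) x = vsc U c (gterm U f \<phi> x)"
    using xc by (auto simp: gterm_def vs_sc_sc[OF U] mult.commute)
  have gxc: "gterm U f \<phi> x \<in> vcar U" using xc by (auto simp: gterm_def)
  have "finsum (vR U) (gterm U f (\<lambda>p. c * \<phi> p)) (insert x F)
      = add (vR U) (gterm U f (\<lambda>p. c * \<phi> p) x) (finsum (vR U) (gterm U f (\<lambda>p. c * \<phi> p)) F)"
    by (rule U.finsum_insert) (use insert gterm_Pi[OF Fc] gterm_Pi[of "{x}"] xc in auto)
  also have "\<dots> = vadd U (vsc U c (gterm U f \<phi> x)) (vsc U c (finsum (vR U) (gterm U f \<phi>) F))"
    using insert Fc xc gx by simp
  also have "\<dots> = vsc U c (vadd U (gterm U f \<phi> x) (finsum (vR U) (gterm U f \<phi>) F))"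
    using vs_sc_add[OF U] U.finsum_closed[OF gterm_Pi[OF Fc]] gxc by auto
  also have "vadd U (gterm U f \<phi> x) (finsum (vR U) (gterm U f \<phi>) F) = finsum (vR U) (gterm U f \<phi>) (insert x F)"
    using U.finsum_insert[of F x "gterm U f \<phi>"] insert gterm_Pi[OF Fc] gterm_Pi[of "{x}"] xc by auto
  finally show ?case .
qed

lemma Lsum_delta:
  assumes "finite Q" "Q \<subseteq> vcar V \<times> vcar W" "q \<in> Q"
  shows "finsum (vR U) (gterm U f (delta q)) Q = f (fst q) (snd q)"
proof -
  have "finsum (vR U) (gterm U f (delta q)) Q = finsum (vR U) (gterm U f (delta q)) {q}"
    by (rule Lsum_mono) (use assms in \<open>auto simp: supp_def delta_def\<close>)
  also have "\<dots> = f (fst q) (snd q)"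
    using assms finsum_single[of q] by (auto simp: gterm_def delta_def)
  finally show ?thesis .
qed

lemma Lsum_fsum:
  assumes "finite Q" "Q \<subseteq> vcar V \<times> vcar W" "set xs \<subseteq> Q"
  shows "finsum (vR U) (gterm U f (fsum xs)) Q = lsum U f xs"
  using assms(3)
proof (induction xs)
  case Nil
  have "finsum (vR U) (gterm U f (fsum [])) Q = finsum (vR U) (\<lambda>_. zero (vR U)) Q"
    apply (rule U.finsum_cong'[OF refl])
     apply simp
    subgoal for p using assms by (cases p) (auto simp: gterm_def fsum_def)
    done
  then show ?case using U.finsum_zero by simp
next
  case (Cons x xs)
  obtain v w where x: "x = (v, w)" by (cases x)
  have e: "fsum (x # xs) = (\<lambda>p. delta x p + fsum xs p)"
    by (auto simp: fsum_def delta_def)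
  show ?case unfolding e
    using Cons Lsum_add[OF assms(1,2)] Lsum_delta[OF assms(1,2)] x by simp
qed

lemma comb3:
  assumes "a \<in> vcar V \<times> vcar W" "b \<in> vcar V \<times> vcar W" "c \<in> vcar V \<times> vcar W"
  shows "finsum (vR U) (gterm U f (\<lambda>p. x * delta a p + y * delta b p + z * delta c p)) {a, b, c}
     = vadd U (vsc U x (f (fst a) (snd a))) (vadd U (vsc U y (f (fst b) (snd b))) (vsc U z (f (fst c) (snd c))))"
proof -
  let ?P = "{a, b, c}"
  have P: "finite ?P" "?P \<subseteq> vcar V \<times> vcar W" using assms by auto
  have "finsum (vR U) (gterm U f (\<lambda>p. x * delta a p + y * delta b p + z * delta c p)) ?P
      = finsum (vR U) (gterm U f (\<lambda>p. x * delta a p + (y * delta b p + z * delta c p))) ?P"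
    by (simp add: add.assoc)
  also have "\<dots> = vadd U (finsum (vR U) (gterm U f (\<lambda>p. x * delta a p)) ?P)
        (finsum (vR U) (gterm U f (\<lambda>p. y * delta b p + z * delta c p)) ?P)"
    by (rule Lsum_add[OF P])
  also have "finsum (vR U) (gterm U f (\<lambda>p. y * delta b p + z * delta c p)) ?P
     = vadd U (finsum (vR U) (gterm U f (\<lambda>p. y * delta b p)) ?P) (finsum (vR U) (gterm U f (\<lambda>p. z * delta c p)) ?P)"
    by (rule Lsum_add[OF P])
  finally show ?thesis using Lsum_sc[OF P] Lsum_delta[OF P] by simp
qed

lemma comb3_zero:
  assumes "a \<in> vcar V \<times> vcar W" "b \<in> vcar V \<times> vcar W" "c \<in> vcar V \<times> vcar W"
    "vadd U (vsc U x (f (fst a) (snd a))) (vadd U (vsc U y (f (fst b) (snd b))) (vsc U z (f (fst c) (snd c)))) = vzero U"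
  shows "\<exists>P. finite P \<and> P \<subseteq> vcar V \<times> vcar W \<and> supp (\<lambda>p. x * delta a p + y * delta b p + z * delta c p) \<subseteq> P
     \<and> finsum (vR U) (gterm U f (\<lambda>p. x * delta a p + y * delta b p + z * delta c p)) P = vzero U"
  apply (rule exI[of _ "{a,b,c}"])
  using assms comb3[OF assms(1-3)] by (auto simp: supp_def delta_def)

lemma trel_L:
  assumes "\<phi> \<in> trel V W"
  shows "\<exists>P. finite P \<and> P \<subseteq> vcar V \<times> vcar W \<and> supp \<phi> \<subseteq> P \<and> finsum (vR U) (gterm U f \<phi>) P = vzero U"
  using assms
proof (induction rule: trel.induct)
  case zero
  show ?case by (rule exI[of _ "{}"]) (simp add: supp_def)
next
  case (addl v v' w)
  let ?a = "(vadd V v v', w)" and ?b = "(v, w)" and ?c = "(v', w)"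
  have e: "(\<lambda>p. delta (vadd V v v', w) p - delta (v, w) p - delta (v', w) p)
     = (\<lambda>p. 1 * delta ?a p + (-1) * delta ?b p + (-1) * delta ?c p)" by auto
  have X: "f (vadd V v v') w = vadd U (f v w) (f v' w)" by (rule bilD(2)[OF f]) (use addl in auto)
  have Y: "vadd U (vsc U (-1) (f v w)) (vsc U (-1) (f v' w)) = vsc U (-1) (vadd U (f v w) (f v' w))"
    using vs_sc_add[OF U] addl by simp
  have "vadd U (vsc U 1 (f (vadd V v v') w)) (vadd U (vsc U (-1) (f v w)) (vsc U (-1) (f v' w))) = vzero U"
    unfolding X Y using vs_neg[OF U] addl by simp
  then show ?case unfolding e using addl by (intro comb3_zero) auto
next
  case (addr v w w')
  let ?a = "(v, vadd W w w')" and ?b = "(v, w)" and ?c = "(v, w')"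
  have e: "(\<lambda>p. delta (v, vadd W w w') p - delta (v, w) p - delta (v, w') p)
     = (\<lambda>p. 1 * delta ?a p + (-1) * delta ?b p + (-1) * delta ?c p)" by auto
  have X: "f v (vadd W w w') = vadd U (f v w) (f v w')" by (rule bilD(3)[OF f]) (use addr in auto)
  have Y: "vadd U (vsc U (-1) (f v w)) (vsc U (-1) (f v w')) = vsc U (-1) (vadd U (f v w) (f v w'))"
    using vs_sc_add[OF U] addr by simp
  have "vadd U (vsc U 1 (f v (vadd W w w'))) (vadd U (vsc U (-1) (f v w)) (vsc U (-1) (f v w'))) = vzero U"
    unfolding X Y using vs_neg[OF U] addr by simp
  then show ?case unfolding e using addr by (intro comb3_zero) auto
next
  case (scl v w c)
  let ?a = "(vsc V c v, w)" and ?b = "(v, w)"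
  have e: "(\<lambda>p. delta (vsc V c v, w) p - c * delta (v, w) p)
     = (\<lambda>p. 1 * delta ?a p + (-c) * delta ?b p + 0 * delta ?b p)" by auto
  have "vadd U (vsc U 1 (f (vsc V c v) w)) (vadd U (vsc U (-c) (f v w)) (vsc U 0 (f v w))) = vzero U"
    using scl bilD[OF f] vs_add_sc[OF U, symmetric, of "f v w" c "-c"] by simp
  then show ?case unfolding e using scl by (intro comb3_zero) auto
next
  case (scr v w c)
  let ?a = "(v, vsc W c w)" and ?b = "(v, w)"
  have e: "(\<lambda>p. delta (v, vsc W c w) p - c * delta (v, w) p)
     = (\<lambda>p. 1 * delta ?a p + (-c) * delta ?b p + 0 * delta ?b p)" by auto
  have "vadd U (vsc U 1 (f v (vsc W c w))) (vadd U (vsc U (-c) (f v w)) (vsc U 0 (f v w))) = vzero U"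
    using scr bilD[OF f] vs_add_sc[OF U, symmetric, of "f v w" c "-c"] by simp
  then show ?case unfolding e using scr by (intro comb3_zero) auto
next
  case (sum g h)
  obtain P1 where P1: "finite P1" "P1 \<subseteq> vcar V \<times> vcar W" "supp g \<subseteq> P1" "finsum (vR U) (gterm U f g) P1 = vzero U"
    using sum by blast
  obtain P2 where P2: "finite P2" "P2 \<subseteq> vcar V \<times> vcar W" "supp h \<subseteq> P2" "finsum (vR U) (gterm U f h) P2 = vzero U"
    using sum by blast
  let ?Q = "P1 \<union> P2"
  have Q: "finite ?Q" "?Q \<subseteq> vcar V \<times> vcar W" using P1 P2 by auto
  have "finsum (vR U) (gterm U f g) ?Q = vzero U" using Lsum_mono[OF Q, of g P1] P1 by auto
  moreover have "finsum (vR U) (gterm U f h) ?Q = vzero U" using Lsum_mono[OF Q, of h P2] P2 by auto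
  ultimately have "finsum (vR U) (gterm U f (\<lambda>p. g p + h p)) ?Q = vzero U"
    using Lsum_add[OF Q] by simp
  moreover have "supp (\<lambda>p. g p + h p) \<subseteq> ?Q" using P1 P2 by (force simp: supp_def)
  ultimately show ?case using Q by blast
next
  case (smul g c)
  obtain P1 where P1: "finite P1" "P1 \<subseteq> vcar V \<times> vcar W" "supp g \<subseteq> P1" "finsum (vR U) (gterm U f g) P1 = vzero U"
    using smul by blast
  have "finsum (vR U) (gterm U f (\<lambda>p. c * g p)) P1 = vzero U"
    using Lsum_sc[OF P1(1,2)] P1 vs_sc_zero[OF U] by simp
  moreover have "supp (\<lambda>p. c * g p) \<subseteq> P1" using P1 by (auto simp: supp_def)
  ultimately show ?case using P1 by blast
qed

lemma lsum_closed: "set xs \<subseteq> vcar V \<times> vcar W \<Longrightarrow> lsum U f xs \<in> vcar U"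
proof (induction xs)
  case (Cons x xs)
  then show ?case by (cases x) auto
qed simp

lemma teq_lsum:
  assumes "teq V W xs ys"
  shows "lsum U f xs = lsum U f ys"
proof -
  have xs: "set xs \<subseteq> vcar V \<times> vcar W" and ys: "set ys \<subseteq> vcar V \<times> vcar W"
    and tr: "(\<lambda>p. fsum xs p - fsum ys p) \<in> trel V W" using assms unfolding teq_def by blast+
  obtain P where P0: "finite P \<and> P \<subseteq> vcar V \<times> vcar W \<and> supp (\<lambda>p. fsum xs p - fsum ys p :: 'k) \<subseteq> P
     \<and> finsum (vR U) (gterm U f (\<lambda>p. fsum xs p - fsum ys p)) P = vzero U"
    using trel_L[OF tr] by blast
  note P = conjunct1[OF P0] conjunct1[OF conjunct2[OF P0]] conjunct1[OF conjunct2[OF conjunct2[OF P0]]]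
     conjunct2[OF conjunct2[OF conjunct2[OF P0]]]
  let ?Q = "P \<union> set xs \<union> set ys"
  have Q: "finite ?Q" "?Q \<subseteq> vcar V \<times> vcar W" using P xs ys by auto
  have h1: "finsum (vR U) (gterm U f (\<lambda>p. fsum xs p - fsum ys p)) ?Q = vzero U"
  proof -
    have PQ: "P \<subseteq> ?Q" by blast
    show ?thesis using Lsum_mono[OF Q P(3) PQ] P(4) by (rule trans)
  qed
  have e: "(\<lambda>p. fsum xs p - fsum ys p :: 'k) = (\<lambda>p. fsum xs p + (-1) * fsum ys p)" by auto
  have h2: "finsum (vR U) (gterm U f (\<lambda>p. fsum xs p + (-1) * fsum ys p)) ?Q = vzero U"
    using h1 unfolding e .
  have h3: "finsum (vR U) (gterm U f (\<lambda>p. fsum xs p + (-1) * fsum ys p)) ?Q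
     = vadd U (finsum (vR U) (gterm U f (fsum xs)) ?Q) (finsum (vR U) (gterm U f (\<lambda>p. (-1) * fsum ys p)) ?Q)"
    by (rule Lsum_add[OF Q])
  have h4: "finsum (vR U) (gterm U f (\<lambda>p. (-1) * fsum ys p)) ?Q = vsc U (-1) (finsum (vR U) (gterm U f (fsum ys)) ?Q)"
    by (rule Lsum_sc[OF Q])
  have h5: "finsum (vR U) (gterm U f (fsum xs)) ?Q = lsum U f xs" by (rule Lsum_fsum[OF Q]) auto
  have h6: "finsum (vR U) (gterm U f (fsum ys)) ?Q = lsum U f ys" by (rule Lsum_fsum[OF Q]) auto
  have "vadd U (lsum U f xs) (vsc U (-1) (lsum U f ys)) = vzero U"
    using h2 unfolding h3 h4 h5 h6 .
  thus ?thesis using vs_sc_neg_eq[OF U] lsum_closed xs ys by blast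
qed

end


definition scmap :: "('k::field, 'a) vs \<Rightarrow> 'k \<Rightarrow> ('a \<times> 'b) list \<Rightarrow> ('a \<times> 'b) list" where
  "scmap V c xs = map (\<lambda>(v, w). (vsc V c v, w)) xs"

lemma fsum_Nil: "fsum [] = (\<lambda>p. 0)" by (simp add: fsum_def)
lemma fsum_Cons: "fsum (x # xs) = (\<lambda>p. delta x p + fsum xs p)"
  by (auto simp: fsum_def delta_def)
lemma fsum_append: "fsum (xs @ ys) = (\<lambda>p. fsum xs p + fsum ys p)"
  by (auto simp: fsum_def)

lemma trel_lin: "\<phi> \<in> trel V W \<Longrightarrow> \<psi> \<in> trel V W \<Longrightarrow> (\<lambda>p. a * \<phi> p + b * \<psi> p) \<in> trel V W"
  by (intro trel.sum trel.smul)

lemma trel_eqI: "\<phi> \<in> trel V W \<Longrightarrow> \<phi> = \<psi> \<Longrightarrow> \<psi> \<in> trel V W" by simp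

lemma trel_lin_eq: "\<phi> \<in> trel V W \<Longrightarrow> \<psi> \<in> trel V W \<Longrightarrow> (\<And>p. \<chi> p = a * \<phi> p + b * \<psi> p) \<Longrightarrow> \<chi> \<in> trel V W"
  using trel_lin[of \<phi> V W \<psi> a b] by (metis (no_types, lifting) ext)

lemma trel_zero': "(\<And>p. \<chi> p = 0) \<Longrightarrow> \<chi> \<in> trel V W"
  using trel.zero[of V W] by (metis (no_types, lifting) ext)

context fixes V :: "('k::field, 'a) vs" and W :: "('k, 'b) vs"
  assumes V: "is_vs V" and W: "is_vs W"
begin

lemmas Vs'[simp] = vs_sc[OF V] vs_add[OF V] vs_zero[OF V]
lemmas Ws'[simp] = vs_sc[OF W] vs_add[OF W] vs_zero[OF W]

lemma teq_refl: "set xs \<subseteq> vcar V \<times> vcar W \<Longrightarrow> teq V W xs xs"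
  unfolding teq_def by (simp add: trel_zero')

lemma teq_sym: "teq V W xs ys \<Longrightarrow> teq V W ys xs"
proof -
  assume "teq V W xs ys"
  then have a: "set xs \<subseteq> vcar V \<times> vcar W" "set ys \<subseteq> vcar V \<times> vcar W"
    "(\<lambda>p. fsum xs p - fsum ys p :: 'k) \<in> trel V W" unfolding teq_def by auto
  have "(\<lambda>p. fsum ys p - fsum xs p :: 'k) \<in> trel V W"
    by (rule trel_lin_eq[OF a(3) a(3), where a="-1" and b=0]) simp
  then show ?thesis using a unfolding teq_def by auto
qed

lemma teq_trans: "teq V W xs ys \<Longrightarrow> teq V W ys zs \<Longrightarrow> teq V W xs zs"
proof -
  assume "teq V W xs ys" "teq V W ys zs"
  then have a: "set xs \<subseteq> vcar V \<times> vcar W" "set zs \<subseteq> vcar V \<times> vcar W"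
    "(\<lambda>p. fsum xs p - fsum ys p :: 'k) \<in> trel V W" "(\<lambda>p. fsum ys p - fsum zs p :: 'k) \<in> trel V W"
    unfolding teq_def by auto
  have "(\<lambda>p. fsum xs p - fsum zs p :: 'k) \<in> trel V W"
    by (rule trel_lin_eq[OF a(3) a(4), where a=1 and b=1]) simp
  then show ?thesis using a unfolding teq_def by auto
qed

lemma tclass_eq: "teq V W xs ys \<Longrightarrow> tclass V W xs = tclass V W ys"
  unfolding tclass_def
proof (rule Collect_cong)
  fix zs assume t: "teq V W xs ys"
  show "teq V W xs zs = teq V W ys zs"
    using teq_trans[OF teq_sym[OF t], of zs] teq_trans[OF t, of zs] by (rule iffI)
qed

lemma trep_class:
  assumes "set xs \<subseteq> vcar V \<times> vcar W"
  shows "teq V W xs (trep (tclass V W xs))" "set (trep (tclass V W xs)) \<subseteq> vcar V \<times> vcar W"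
    "tclass V W (trep (tclass V W xs)) = tclass V W xs"
proof -
  have "xs \<in> tclass V W xs" using teq_refl[OF assms] by (simp add: tclass_def)
  hence "trep (tclass V W xs) \<in> tclass V W xs" unfolding trep_def by (rule someI)
  thus t: "teq V W xs (trep (tclass V W xs))" by (simp add: tclass_def)
  thus "set (trep (tclass V W xs)) \<subseteq> vcar V \<times> vcar W" by (simp add: teq_def)
  show "tclass V W (trep (tclass V W xs)) = tclass V W xs" using tclass_eq[OF t] by simp
qed

lemma teq_append: "teq V W xs xs' \<Longrightarrow> teq V W ys ys' \<Longrightarrow> teq V W (xs @ ys) (xs' @ ys')"
proof -
  assume "teq V W xs xs'" "teq V W ys ys'"
  then have a: "set (xs @ ys) \<subseteq> vcar V \<times> vcar W" "set (xs' @ ys') \<subseteq> vcar V \<times> vcar W"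
    "(\<lambda>p. fsum xs p - fsum xs' p :: 'k) \<in> trel V W" "(\<lambda>p. fsum ys p - fsum ys' p :: 'k) \<in> trel V W"
    unfolding teq_def by auto
  have "(\<lambda>p. fsum (xs @ ys) p - fsum (xs' @ ys') p :: 'k) \<in> trel V W"
    by (rule trel_lin_eq[OF a(3) a(4), where a=1 and b=1]) (simp add: fsum_append)
  then show ?thesis using a unfolding teq_def by auto
qed

lemma fsum_scmap: "set xs \<subseteq> vcar V \<times> vcar W \<Longrightarrow> (\<lambda>p. fsum (scmap V c xs) p - c * fsum xs p) \<in> trel V W"
proof (induction xs)
  case Nil
  then show ?case by (auto simp: scmap_def fsum_Nil intro: trel_zero')
next
  case (Cons x xs)
  obtain v w where x: "x = (v, w)" by (cases x)
  have g: "(\<lambda>p. delta (vsc V c v, w) p - c * delta (v, w) p) \<in> trel V W"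
    using Cons x by (intro trel.scl) auto
  have i: "(\<lambda>p. fsum (scmap V c xs) p - c * fsum xs p) \<in> trel V W" using Cons by auto
  show ?case
    by (rule trel_lin_eq[OF g i, where a=1 and b=1]) (simp add: x scmap_def fsum_Cons algebra_simps)
qed

lemma scmap_append: "scmap V c (xs @ ys) = scmap V c xs @ scmap V c ys"
  by (simp add: scmap_def)

lemma set_scmap: "set xs \<subseteq> vcar V \<times> vcar W \<Longrightarrow> set (scmap V c xs) \<subseteq> vcar V \<times> vcar W"
  by (auto simp: scmap_def)

lemma teq_scmap: "teq V W xs ys \<Longrightarrow> teq V W (scmap V c xs) (scmap V c ys)"
proof -
  assume t: "teq V W xs ys"
  hence xs: "set xs \<subseteq> vcar V \<times> vcar W" and ys: "set ys \<subseteq> vcar V \<times> vcar W"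
    and r: "(\<lambda>p. fsum xs p - fsum ys p :: 'k) \<in> trel V W" by (auto simp: teq_def)
  have a: "(\<lambda>p. fsum (scmap V c xs) p - c * fsum xs p) \<in> trel V W" by (rule fsum_scmap[OF xs])
  have b: "(\<lambda>p. fsum (scmap V c ys) p - c * fsum ys p) \<in> trel V W" by (rule fsum_scmap[OF ys])
  have ab: "(\<lambda>p. 1 * (fsum (scmap V c xs) p - c * fsum xs p) + (-1) * (fsum (scmap V c ys) p - c * fsum ys p)) \<in> trel V W"
    by (rule trel_lin[OF a b])
  have "(\<lambda>p. fsum (scmap V c xs) p - fsum (scmap V c ys) p) \<in> trel V W"
    by (rule trel_lin_eq[OF ab r, where a=1 and b=c]) (simp add: algebra_simps)
  thus ?thesis using set_scmap xs ys by (simp add: teq_def)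
qed

lemma tsp_car: "vcar (tsp V W) = {tclass V W xs | xs. set xs \<subseteq> vcar V \<times> vcar W}"
  by (simp add: tsp_def)

lemma tsp_carE: "t \<in> vcar (tsp V W) \<Longrightarrow> (\<And>xs. t = tclass V W xs \<Longrightarrow> set xs \<subseteq> vcar V \<times> vcar W \<Longrightarrow> P) \<Longrightarrow> P"
  unfolding tsp_car by blast

lemma tclass_car: "set xs \<subseteq> vcar V \<times> vcar W \<Longrightarrow> tclass V W xs \<in> vcar (tsp V W)"
  unfolding tsp_car by blast

lemma tsp_add: "set xs \<subseteq> vcar V \<times> vcar W \<Longrightarrow> set ys \<subseteq> vcar V \<times> vcar W \<Longrightarrow>
    vadd (tsp V W) (tclass V W xs) (tclass V W ys) = tclass V W (xs @ ys)"
  unfolding tsp_def by (simp add: tclass_eq teq_append teq_sym trep_class)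

lemma tsp_sc: "set xs \<subseteq> vcar V \<times> vcar W \<Longrightarrow>
    vsc (tsp V W) c (tclass V W xs) = tclass V W (scmap V c xs)"
proof -
  assume xs: "set xs \<subseteq> vcar V \<times> vcar W"
  have "vsc (tsp V W) c (tclass V W xs) = tclass V W (scmap V c (trep (tclass V W xs)))"
    by (simp add: tsp_def scmap_def)
  also have "\<dots> = tclass V W (scmap V c xs)"
    by (rule tclass_eq[OF teq_scmap[OF teq_sym[OF trep_class(1)[OF xs]]]])
  finally show ?thesis .
qed

lemma tsp_zero: "vzero (tsp V W) = tclass V W []" by (simp add: tsp_def)

lemma trep_set: "t \<in> vcar (tsp V W) \<Longrightarrow> set (trep t) \<subseteq> vcar V \<times> vcar W"
  by (erule tsp_carE) (simp add: trep_class)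

lemma trep_eq: "t \<in> vcar (tsp V W) \<Longrightarrow> tclass V W (trep t) = t"
  by (erule tsp_carE) (simp add: trep_class)

lemma tsp_is_vs: "is_vs (tsp V W)"
proof -
  let ?T = "tsp V W"
  have A: "\<forall>x\<in>vcar ?T. \<forall>y\<in>vcar ?T. vadd ?T x y \<in> vcar ?T"
  proof (intro ballI)
    fix x y assume "x \<in> vcar ?T" "y \<in> vcar ?T"
    then obtain xs ys where x: "x = tclass V W xs" "set xs \<subseteq> vcar V \<times> vcar W"
      and y: "y = tclass V W ys" "set ys \<subseteq> vcar V \<times> vcar W" by (auto simp: tsp_car)
    show "vadd ?T x y \<in> vcar ?T" using x y by (simp add: tsp_add tclass_car)
  qed
  have S: "\<forall>c. \<forall>x\<in>vcar ?T. vsc ?T c x \<in> vcar ?T"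
  proof (intro allI ballI)
    fix c x assume "x \<in> vcar ?T"
    then obtain xs where x: "x = tclass V W xs" "set xs \<subseteq> vcar V \<times> vcar W" by (auto simp: tsp_car)
    show "vsc ?T c x \<in> vcar ?T" using x by (simp add: tsp_sc tclass_car set_scmap)
  qed
  have As: "\<forall>x\<in>vcar ?T. \<forall>y\<in>vcar ?T. \<forall>z\<in>vcar ?T. vadd ?T (vadd ?T x y) z = vadd ?T x (vadd ?T y z)"
    by (auto simp: tsp_car tsp_add)
  have C: "\<forall>x\<in>vcar ?T. \<forall>y\<in>vcar ?T. vadd ?T x y = vadd ?T y x"
  proof (intro ballI)
    fix x y assume "x \<in> vcar ?T" "y \<in> vcar ?T"
    then obtain xs ys where x: "x = tclass V W xs" "set xs \<subseteq> vcar V \<times> vcar W"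
      and y: "y = tclass V W ys" "set ys \<subseteq> vcar V \<times> vcar W" by (auto simp: tsp_car)
    have "teq V W (xs @ ys) (ys @ xs)"
      using x y unfolding teq_def fsum_append by (auto intro: trel_zero')
    thus "vadd ?T x y = vadd ?T y x" using x y by (simp add: tsp_add tclass_eq)
  qed
  have Z: "\<forall>x\<in>vcar ?T. vadd ?T (vzero ?T) x = x"
    by (auto simp: tsp_car tsp_add tsp_zero)
  have N: "\<forall>x\<in>vcar ?T. \<exists>y\<in>vcar ?T. vadd ?T x y = vzero ?T"
  proof
    fix x assume "x \<in> vcar ?T"
    then obtain xs where x: "x = tclass V W xs" "set xs \<subseteq> vcar V \<times> vcar W" by (auto simp: tsp_car)
    have a: "(\<lambda>p. fsum (scmap V (-1) xs) p - (-1) * fsum xs p) \<in> trel V W" by (rule fsum_scmap[OF x(2)])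
    have "teq V W (xs @ scmap V (-1) xs) []"
      unfolding teq_def using x set_scmap[OF x(2)]
      by (auto intro!: trel_lin_eq[OF a a, where a=1 and b=0] simp: fsum_append fsum_Nil)
    thus "\<exists>y\<in>vcar ?T. vadd ?T x y = vzero ?T"
      using x set_scmap[OF x(2)] by (intro bexI[of _ "tclass V W (scmap V (-1) xs)"])
        (auto simp: tsp_add tsp_zero tclass_eq intro: tclass_car)
  qed
  have D1: "\<forall>c. \<forall>x\<in>vcar ?T. \<forall>y\<in>vcar ?T. vsc ?T c (vadd ?T x y) = vadd ?T (vsc ?T c x) (vsc ?T c y)"
    by (auto simp: tsp_car tsp_add tsp_sc set_scmap scmap_append)
  have D2: "\<forall>c d. \<forall>x\<in>vcar ?T. vsc ?T (c + d) x = vadd ?T (vsc ?T c x) (vsc ?T d x)"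
  proof (intro allI ballI)
    fix c d x assume "x \<in> vcar ?T"
    then obtain xs where x: "x = tclass V W xs" "set xs \<subseteq> vcar V \<times> vcar W" by (auto simp: tsp_car)
    have a: "(\<lambda>p. fsum (scmap V (c+d) xs) p - (c+d) * fsum xs p) \<in> trel V W" by (rule fsum_scmap[OF x(2)])
    have b: "(\<lambda>p. fsum (scmap V c xs) p - c * fsum xs p) \<in> trel V W" by (rule fsum_scmap[OF x(2)])
    have b2: "(\<lambda>p. fsum (scmap V d xs) p - d * fsum xs p) \<in> trel V W" by (rule fsum_scmap[OF x(2)])
    have ab: "(\<lambda>p. 1 * (fsum (scmap V (c+d) xs) p - (c+d) * fsum xs p) + (-1) * (fsum (scmap V c xs) p - c * fsum xs p)) \<in> trel V W"
      by (rule trel_lin[OF a b])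
    have "teq V W (scmap V (c+d) xs) (scmap V c xs @ scmap V d xs)"
      unfolding teq_def using x set_scmap[OF x(2)]
      by (auto intro!: trel_lin_eq[OF ab b2, where a=1 and b="-1"] simp: fsum_append algebra_simps)
    thus "vsc ?T (c + d) x = vadd ?T (vsc ?T c x) (vsc ?T d x)"
      using x set_scmap[OF x(2)] by (simp add: tsp_add tsp_sc tclass_eq)
  qed
  have D3: "\<forall>c d. \<forall>x\<in>vcar ?T. vsc ?T c (vsc ?T d x) = vsc ?T (c * d) x"
  proof (intro allI ballI)
    fix c d x assume "x \<in> vcar ?T"
    then obtain xs where x: "x = tclass V W xs" "set xs \<subseteq> vcar V \<times> vcar W" by (auto simp: tsp_car)
    have "scmap V c (scmap V d xs) = scmap V (c * d) xs"
      using x(2) by (auto simp: scmap_def vs_sc_sc[OF V])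
    thus "vsc ?T c (vsc ?T d x) = vsc ?T (c * d) x"
      using x set_scmap[OF x(2)] by (simp add: tsp_sc)
  qed
  have O: "\<forall>x\<in>vcar ?T. vsc ?T 1 x = x"
  proof
    fix x assume "x \<in> vcar ?T"
    then obtain xs where x: "x = tclass V W xs" "set xs \<subseteq> vcar V \<times> vcar W" by (auto simp: tsp_car)
    have "scmap V 1 xs = xs" using x(2) by (induction xs) (auto simp: scmap_def vs_one[OF V])
    thus "vsc ?T 1 x = x" using x by (simp add: tsp_sc)
  qed
  have Zc: "vzero ?T \<in> vcar ?T" by (simp add: tsp_zero tclass_car)
  show ?thesis unfolding is_vs_def using A S As C Z N D1 D2 D3 O Zc by blast
qed

lemma tens_car[simp]: "v \<in> vcar V \<Longrightarrow> w \<in> vcar W \<Longrightarrow> tens V W v w \<in> vcar (tsp V W)"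
  unfolding tens_def by (rule tclass_car) simp

lemma tclass_Cons: "set (x # xs) \<subseteq> vcar V \<times> vcar W \<Longrightarrow>
   tclass V W (x # xs) = vadd (tsp V W) (tens V W (fst x) (snd x)) (tclass V W xs)"
  using tsp_add[of "[x]" xs] by (cases x) (simp add: tens_def)

lemma tens_bil: "bilinear_map V W (tsp V W) (tens V W)"
proof -
  have l1: "linear_map V (tsp V W) (\<lambda>v. tens V W v w)" if w: "w \<in> vcar W" for w
    unfolding linear_map_def
  proof (intro conjI ballI allI)
    fix x y assume x: "x \<in> vcar V" and y: "y \<in> vcar V"
    have "teq V W [(vadd V x y, w)] ([(x, w)] @ [(y, w)])"
      unfolding teq_def using x y w
      by (auto intro!: trel_lin_eq[OF trel.addl[OF x y w] trel.zero, where a=1 and b=0]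
          simp: fsum_Cons fsum_Nil delta_def)
    thus "tens V W (vadd V x y) w = vadd (tsp V W) (tens V W x w) (tens V W y w)"
      using x y w by (simp add: tens_def tsp_add tclass_eq)
  next
    fix c x assume x: "x \<in> vcar V"
    show "tens V W (vsc V c x) w = vsc (tsp V W) c (tens V W x w)"
      using x w by (simp add: tens_def tsp_sc scmap_def)
  qed (use w in simp)
  have l2: "linear_map W (tsp V W) (\<lambda>w. tens V W v w)" if v: "v \<in> vcar V" for v
    unfolding linear_map_def
  proof (intro conjI ballI allI)
    fix x y assume x: "x \<in> vcar W" and y: "y \<in> vcar W"
    have "teq V W [(v, vadd W x y)] ([(v, x)] @ [(v, y)])"
      unfolding teq_def using x y v
      by (auto intro!: trel_lin_eq[OF trel.addr[OF v x y] trel.zero, where a=1 and b=0]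
          simp: fsum_Cons fsum_Nil delta_def)
    thus "tens V W v (vadd W x y) = vadd (tsp V W) (tens V W v x) (tens V W v y)"
      using x y v by (simp add: tens_def tsp_add tclass_eq)
  next
    fix c x assume x: "x \<in> vcar W"
    have a: "(\<lambda>p. delta (v, vsc W c x) p - c * delta (v, x) p) \<in> trel V W" by (rule trel.scr[OF v x])
    have b: "(\<lambda>p. delta (vsc V c v, x) p - c * delta (v, x) p) \<in> trel V W" by (rule trel.scl[OF v x])
    have "teq V W [(v, vsc W c x)] [(vsc V c v, x)]"
      unfolding teq_def using x v
      by (auto intro!: trel_lin_eq[OF a b, where a=1 and b="-1"] simp: fsum_Cons fsum_Nil delta_def)
    thus "tens V W v (vsc W c x) = vsc (tsp V W) c (tens V W v x)"
      using x v by (simp add: tens_def tsp_sc scmap_def tclass_eq)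
  qed (use v in simp)
  show ?thesis unfolding bilinear_map_def using l1 l2 by blast
qed

end


lemma vs_add4:
  assumes "is_vs U" "a \<in> vcar U" "b \<in> vcar U" "c \<in> vcar U" "d \<in> vcar U"
  shows "vadd U (vadd U a b) (vadd U c d) = vadd U (vadd U a c) (vadd U b d)"
proof -
  have "vadd U (vadd U a b) (vadd U c d) = vadd U a (vadd U b (vadd U c d))" using assms vs_assoc[OF assms(1)] by simp
  also have "vadd U b (vadd U c d) = vadd U c (vadd U b d)"
    using assms vs_assoc[OF assms(1)] vs_comm[OF assms(1)] vs_add[OF assms(1)] by metis
  also have "vadd U a (vadd U c (vadd U b d)) = vadd U (vadd U a c) (vadd U b d)" using assms vs_assoc[OF assms(1)] by simp
  finally show ?thesis .
qed

lemma linD: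
  assumes "linear_map V W f"
  shows "x \<in> vcar V \<Longrightarrow> f x \<in> vcar W"
    and "x \<in> vcar V \<Longrightarrow> y \<in> vcar V \<Longrightarrow> f (vadd V x y) = vadd W (f x) (f y)"
    and "x \<in> vcar V \<Longrightarrow> f (vsc V c x) = vsc W c (f x)"
  using assms unfolding linear_map_def by auto

lemma lin_zero: "is_vs V \<Longrightarrow> is_vs W \<Longrightarrow> linear_map V W f \<Longrightarrow> f (vzero V) = vzero W"
  using linD(3)[of V W f "vzero V" 0] linD(1)[of V W f "vzero V"] by simp

lemma linI:
  assumes "\<And>x. x \<in> vcar V \<Longrightarrow> f x \<in> vcar W"
    and "\<And>x y. x \<in> vcar V \<Longrightarrow> y \<in> vcar V \<Longrightarrow> f (vadd V x y) = vadd W (f x) (f y)"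
    and "\<And>c x. x \<in> vcar V \<Longrightarrow> f (vsc V c x) = vsc W c (f x)"
  shows "linear_map V W f"
  using assms unfolding linear_map_def by auto

lemma lin_comp: "linear_map X Y g \<Longrightarrow> linear_map Y Z h \<Longrightarrow> linear_map X Z (\<lambda>x. h (g x))"
  unfolding linear_map_def by auto

lemma bilI:
  assumes "\<And>w. w \<in> vcar W \<Longrightarrow> linear_map V U (\<lambda>v. f v w)"
    and "\<And>v. v \<in> vcar V \<Longrightarrow> linear_map W U (\<lambda>w. f v w)"
  shows "bilinear_map V W U f"
  using assms unfolding bilinear_map_def by auto

lemma bil_lin1: "bilinear_map V W U f \<Longrightarrow> w \<in> vcar W \<Longrightarrow> linear_map V U (\<lambda>v. f v w)"
  unfolding bilinear_map_def by auto
lemma bil_lin2: "bilinear_map V W U f \<Longrightarrow> v \<in> vcar V \<Longrightarrow> linear_map W U (\<lambda>w. f v w)"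
  unfolding bilinear_map_def by auto

context fixes V :: "('k::field, 'a) vs" and W :: "('k, 'b) vs" and U :: "('k, 'c) vs"
  assumes U: "is_vs U"
begin

lemma lsum_closed':
  "set xs \<subseteq> vcar V \<times> vcar W \<Longrightarrow> (\<And>v w. v \<in> vcar V \<Longrightarrow> w \<in> vcar W \<Longrightarrow> F v w \<in> vcar U)
   \<Longrightarrow> lsum U F xs \<in> vcar U"
proof (induction xs)
  case (Cons x xs)
  then show ?case using U by (cases x) auto
qed (simp add: U)

lemma lsum_append: "lsum U F (xs @ ys) = vadd U (lsum U F xs) (lsum U F ys)"
  if "set xs \<subseteq> vcar V \<times> vcar W" "set ys \<subseteq> vcar V \<times> vcar W"
     "\<And>v w. v \<in> vcar V \<Longrightarrow> w \<in> vcar W \<Longrightarrow> F v w \<in> vcar U"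
  using that
proof (induction xs)
  case Nil
  then show ?case using lsum_closed'[of ys F] U by simp
next
  case (Cons x xs)
  then show ?case using lsum_closed'[of ys F] lsum_closed'[of xs F] U vs_assoc[OF U]
    by (cases x) auto
qed

lemma lsum_cong: "(\<And>v w. (v, w) \<in> set xs \<Longrightarrow> F v w = G v w) \<Longrightarrow> lsum U F xs = lsum U G xs"
proof (induction xs)
  case (Cons x xs)
  then show ?case by (cases x) auto
qed simp

lemma lsum_add_fun:
  "set xs \<subseteq> vcar V \<times> vcar W \<Longrightarrow> (\<And>v w. v \<in> vcar V \<Longrightarrow> w \<in> vcar W \<Longrightarrow> F v w \<in> vcar U)
   \<Longrightarrow> (\<And>v w. v \<in> vcar V \<Longrightarrow> w \<in> vcar W \<Longrightarrow> G v w \<in> vcar U)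
   \<Longrightarrow> lsum U (\<lambda>v w. vadd U (F v w) (G v w)) xs = vadd U (lsum U F xs) (lsum U G xs)"
proof (induction xs)
  case Nil
  then show ?case using U by simp
next
  case (Cons x xs)
  obtain v w where x: "x = (v, w)" by (cases x)
  have c: "v \<in> vcar V" "w \<in> vcar W" using Cons x by auto
  show ?case using Cons x c lsum_closed'[of xs F] lsum_closed'[of xs G] vs_add4[OF U] by simp
qed

lemma lsum_sc_fun:
  "set xs \<subseteq> vcar V \<times> vcar W \<Longrightarrow> (\<And>v w. v \<in> vcar V \<Longrightarrow> w \<in> vcar W \<Longrightarrow> F v w \<in> vcar U)
   \<Longrightarrow> lsum U (\<lambda>v w. vsc U c (F v w)) xs = vsc U c (lsum U F xs)"
proof (induction xs)
  case Nil
  then show ?case using U by simp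
next
  case (Cons x xs)
  obtain v w where x: "x = (v, w)" by (cases x)
  have c: "v \<in> vcar V" "w \<in> vcar W" using Cons x by auto
  show ?case using Cons x c lsum_closed'[of xs F] vs_sc_add[OF U] by simp
qed

lemma lsum_zero_fun: "lsum U (\<lambda>v w. vzero U) xs = vzero U"
  by (induction xs) (auto simp: U)

lemma lsum_map:
  assumes U': "is_vs U'" and L: "linear_map U U' L"
  shows "set xs \<subseteq> vcar V \<times> vcar W \<Longrightarrow> (\<And>v w. v \<in> vcar V \<Longrightarrow> w \<in> vcar W \<Longrightarrow> F v w \<in> vcar U)
   \<Longrightarrow> L (lsum U F xs) = lsum U' (\<lambda>v w. L (F v w)) xs"
proof (induction xs)
  case Nil
  then show ?case using lin_zero[OF U U' L] by simp
next
  case (Cons x xs)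
  obtain v w where x: "x = (v, w)" by (cases x)
  have c: "v \<in> vcar V" "w \<in> vcar W" using Cons x by auto
  show ?case using Cons x c lsum_closed'[of xs F] linD(2)[OF L] by simp
qed

end

lemma lsum_swap:
  fixes V :: "('k::field, 'a) vs" and W :: "('k, 'b) vs" and U :: "('k, 'c) vs"
    and V' :: "('k, 'd) vs" and W' :: "('k, 'e) vs"
  assumes U: "is_vs U" and ys: "set ys \<subseteq> vcar V' \<times> vcar W'"
    and F: "\<And>v w v' w'. v \<in> vcar V \<Longrightarrow> w \<in> vcar W \<Longrightarrow> v' \<in> vcar V' \<Longrightarrow> w' \<in> vcar W' \<Longrightarrow> F v w v' w' \<in> vcar U"
  shows "set xs \<subseteq> vcar V \<times> vcar W \<Longrightarrow>
    lsum U (\<lambda>v w. lsum U (\<lambda>v' w'. F v w v' w') ys) xs = lsum U (\<lambda>v' w'. lsum U (\<lambda>v w. F v w v' w') xs) ys"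
proof (induction xs)
  case Nil
  have "lsum U (\<lambda>v' w'. vzero U) ys = vzero U" by (induction ys) (auto simp: U)
  then show ?case by simp
next
  case (Cons x xs)
  obtain v w where x: "x = (v, w)" by (cases x)
  have c: "v \<in> vcar V" "w \<in> vcar W" and xs: "set xs \<subseteq> vcar V \<times> vcar W" using Cons x by auto
  have "lsum U (\<lambda>v' w'. lsum U (\<lambda>v w. F v w v' w') (x # xs)) ys
     = lsum U (\<lambda>v' w'. vadd U (F v w v' w') (lsum U (\<lambda>v w. F v w v' w') xs)) ys"
    using x by simp
  also have "\<dots> = vadd U (lsum U (\<lambda>v' w'. F v w v' w') ys) (lsum U (\<lambda>v' w'. lsum U (\<lambda>v w. F v w v' w') xs) ys)"
    by (rule lsum_add_fun[OF U ys]) (use F c lsum_closed'[OF U xs] in auto)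
  finally show ?case using Cons xs x by simp
qed

context fixes V :: "('k::field, 'a) vs" and W :: "('k, 'b) vs" and U :: "('k, 'c) vs"
  assumes V: "is_vs V" and W: "is_vs W" and U: "is_vs U"
begin

lemma tlift_closed:
  "t \<in> vcar (tsp V W) \<Longrightarrow> (\<And>v w. v \<in> vcar V \<Longrightarrow> w \<in> vcar W \<Longrightarrow> F v w \<in> vcar U)
   \<Longrightarrow> tlift U F t \<in> vcar U"
  unfolding tlift_lsum by (rule lsum_closed'[OF U trep_set[OF V W]])

lemma tlift_cong:
  "t \<in> vcar (tsp V W) \<Longrightarrow> (\<And>v w. v \<in> vcar V \<Longrightarrow> w \<in> vcar W \<Longrightarrow> F v w = G v w)
   \<Longrightarrow> tlift U F t = tlift U G t"
  unfolding tlift_lsum using trep_set[OF V W, of t] by (intro lsum_cong[OF U]) auto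

lemma tlift_add_fun:
  "t \<in> vcar (tsp V W) \<Longrightarrow> (\<And>v w. v \<in> vcar V \<Longrightarrow> w \<in> vcar W \<Longrightarrow> F v w \<in> vcar U)
   \<Longrightarrow> (\<And>v w. v \<in> vcar V \<Longrightarrow> w \<in> vcar W \<Longrightarrow> G v w \<in> vcar U)
   \<Longrightarrow> tlift U (\<lambda>v w. vadd U (F v w) (G v w)) t = vadd U (tlift U F t) (tlift U G t)"
  unfolding tlift_lsum by (rule lsum_add_fun[OF U trep_set[OF V W]])

lemma tlift_sc_fun:
  "t \<in> vcar (tsp V W) \<Longrightarrow> (\<And>v w. v \<in> vcar V \<Longrightarrow> w \<in> vcar W \<Longrightarrow> F v w \<in> vcar U)
   \<Longrightarrow> tlift U (\<lambda>v w. vsc U c (F v w)) t = vsc U c (tlift U F t)"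
  unfolding tlift_lsum by (rule lsum_sc_fun[OF U trep_set[OF V W]])

lemma tlift_map:
  "is_vs U' \<Longrightarrow> linear_map U U' L \<Longrightarrow> t \<in> vcar (tsp V W) \<Longrightarrow> (\<And>v w. v \<in> vcar V \<Longrightarrow> w \<in> vcar W \<Longrightarrow> F v w \<in> vcar U)
   \<Longrightarrow> L (tlift U F t) = tlift U' (\<lambda>v w. L (F v w)) t"
  unfolding tlift_lsum by (rule lsum_map[OF U _ _ trep_set[OF V W]])

lemma lin_tlift_param:
  assumes X: "is_vs X" and t: "t \<in> vcar (tsp V W)"
    and F: "\<And>v w. v \<in> vcar V \<Longrightarrow> w \<in> vcar W \<Longrightarrow> linear_map X U (\<lambda>x. F x v w)"
  shows "linear_map X U (\<lambda>x. tlift U (F x) t)"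
proof (rule linI)
  fix x assume x: "x \<in> vcar X"
  show "tlift U (F x) t \<in> vcar U" using tlift_closed[OF t] linD(1)[OF F] x by blast
next
  fix x y assume x: "x \<in> vcar X" and y: "y \<in> vcar X"
  have "tlift U (F (vadd X x y)) t = tlift U (\<lambda>v w. vadd U (F x v w) (F y v w)) t"
    by (rule tlift_cong[OF t]) (use linD(2)[OF F] x y in auto)
  also have "\<dots> = vadd U (tlift U (F x) t) (tlift U (F y) t)"
    by (rule tlift_add_fun[OF t]) (use linD(1)[OF F] x y in auto)
  finally show "tlift U (F (vadd X x y)) t = vadd U (tlift U (F x) t) (tlift U (F y) t)" .
next
  fix c x assume x: "x \<in> vcar X"
  have "tlift U (F (vsc X c x)) t = tlift U (\<lambda>v w. vsc U c (F x v w)) t"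
    by (rule tlift_cong[OF t]) (use linD(3)[OF F] x in auto)
  also have "\<dots> = vsc U c (tlift U (F x) t)"
    by (rule tlift_sc_fun[OF t]) (use linD(1)[OF F] x in auto)
  finally show "tlift U (F (vsc X c x)) t = vsc U c (tlift U (F x) t)" .
qed

context fixes F assumes F: "bilinear_map V W U F"
begin

lemma tlift_class: "set xs \<subseteq> vcar V \<times> vcar W \<Longrightarrow> tlift U F (tclass V W xs) = lsum U F xs"
  unfolding tlift_lsum using teq_lsum[OF V W U F teq_sym[OF V W trep_class(1)[OF V W]]] by blast

lemma tlift_tens: "v \<in> vcar V \<Longrightarrow> w \<in> vcar W \<Longrightarrow> tlift U F (tens V W v w) = F v w"
  unfolding tens_def using tlift_class[of "[(v, w)]"] bilD(1)[OF F] U by simp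

lemma tlift_lin: "linear_map (tsp V W) U (tlift U F)"
proof (rule linI)
  fix x assume "x \<in> vcar (tsp V W)"
  then show "tlift U F x \<in> vcar U" using tlift_closed bilD(1)[OF F] by blast
next
  fix x y assume "x \<in> vcar (tsp V W)" "y \<in> vcar (tsp V W)"
  then obtain xs ys where x: "x = tclass V W xs" "set xs \<subseteq> vcar V \<times> vcar W"
      and y: "y = tclass V W ys" "set ys \<subseteq> vcar V \<times> vcar W" by (auto simp: tsp_car[OF V W])
  show "tlift U F (vadd (tsp V W) x y) = vadd U (tlift U F x) (tlift U F y)"
    using x y by (simp add: tsp_add[OF V W] tlift_class lsum_append[OF U] bilD(1)[OF F])
next
  fix c x assume "x \<in> vcar (tsp V W)"
  then obtain xs where x: "x = tclass V W xs" "set xs \<subseteq> vcar V \<times> vcar W" by (auto simp: tsp_car[OF V W])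
  have "lsum U F (scmap V c xs) = vsc U c (lsum U F xs)" using x(2)
  proof (induction xs)
    case Nil
    then show ?case using U by (simp add: scmap_def)
  next
    case (Cons a xs)
    obtain v w where a: "a = (v, w)" by (cases a)
    have c: "v \<in> vcar V" "w \<in> vcar W" using Cons a by auto
    have l: "lsum U F xs \<in> vcar U" by (rule lsum_closed'[OF U]) (use Cons bilD(1)[OF F] in auto)
    show ?case using Cons c bilD[OF F] l vs_sc_add[OF U] by (simp add: scmap_def a)
  qed
  then show "tlift U F (vsc (tsp V W) c x) = vsc U c (tlift U F x)"
    using x by (simp add: tsp_sc[OF V W] tlift_class set_scmap[OF V W])
qed

end

lemma tsp_ext:
  assumes g: "linear_map (tsp V W) U g" and g': "linear_map (tsp V W) U g'"
    and e: "\<And>v w. v \<in> vcar V \<Longrightarrow> w \<in> vcar W \<Longrightarrow> g (tens V W v w) = g' (tens V W v w)"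
    and t: "t \<in> vcar (tsp V W)"
  shows "g t = g' t"
proof -
  obtain xs where x: "t = tclass V W xs" "set xs \<subseteq> vcar V \<times> vcar W" using t by (auto simp: tsp_car[OF V W])
  have "g (tclass V W xs) = g' (tclass V W xs)" using x(2)
  proof (induction xs)
    case Nil
    then show ?case using lin_zero[OF tsp_is_vs[OF V W] U g] lin_zero[OF tsp_is_vs[OF V W] U g']
      by (simp add: tsp_zero[OF V W])
  next
    case (Cons a xs)
    have c: "fst a \<in> vcar V" "snd a \<in> vcar W" using Cons by auto
    have xs: "tclass V W xs \<in> vcar (tsp V W)" using Cons tclass_car[OF V W] by auto
    show ?case unfolding tclass_Cons[OF V W Cons.prems]
      using linD(2)[OF g _ xs] linD(2)[OF g' _ xs] c Cons e tens_car[OF V W] by auto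
  qed
  then show ?thesis using x by simp
qed

end

lemma tlift_tens_id:
  assumes V: "is_vs V" and W: "is_vs W" and t: "t \<in> vcar (tsp V W)"
  shows "tlift (tsp V W) (tens V W) t = t"
proof -
  have l: "linear_map (tsp V W) (tsp V W) (\<lambda>x. x)" by (rule linI) auto
  show ?thesis
    by (rule tsp_ext[OF V W tsp_is_vs[OF V W] tlift_lin[OF V W tsp_is_vs[OF V W] tens_bil[OF V W]] l _ t])
       (simp add: tlift_tens[OF V W tsp_is_vs[OF V W] tens_bil[OF V W]])
qed

lemma tlift_swap:
  fixes V :: "('k::field, 'a) vs" and W :: "('k, 'b) vs" and U :: "('k, 'c) vs"
    and V' :: "('k, 'd) vs" and W' :: "('k, 'e) vs"
  assumes V: "is_vs V" "is_vs W" "is_vs V'" "is_vs W'" and U: "is_vs U"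
    and t: "t \<in> vcar (tsp V W)" and s: "s \<in> vcar (tsp V' W')"
    and F: "\<And>v w v' w'. v \<in> vcar V \<Longrightarrow> w \<in> vcar W \<Longrightarrow> v' \<in> vcar V' \<Longrightarrow> w' \<in> vcar W' \<Longrightarrow> F v w v' w' \<in> vcar U"
  shows "tlift U (\<lambda>v w. tlift U (\<lambda>v' w'. F v w v' w') s) t = tlift U (\<lambda>v' w'. tlift U (\<lambda>v w. F v w v' w') t) s"
  unfolding tlift_lsum by (rule lsum_swap[OF U trep_set[OF V(3,4) s] F trep_set[OF V(1,2) t]])


lemma L_bil1: "bilinear_map V W U f \<Longrightarrow> linear_map X V F \<Longrightarrow> w \<in> vcar W \<Longrightarrow> linear_map X U (\<lambda>x. f (F x) w)"
  by (rule lin_comp[OF _ bil_lin1]) 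
lemma L_bil2: "bilinear_map V W U f \<Longrightarrow> v \<in> vcar V \<Longrightarrow> linear_map X W G \<Longrightarrow> linear_map X U (\<lambda>x. f v (G x))"
  by (rule lin_comp[OF _ bil_lin2])
lemma L_id: "linear_map X X (\<lambda>x. x)" by (rule linI) auto

lemma L_tens1: "is_vs V \<Longrightarrow> is_vs W \<Longrightarrow> linear_map X V F \<Longrightarrow> w \<in> vcar W \<Longrightarrow> linear_map X (tsp V W) (\<lambda>x. tens V W (F x) w)"
  by (rule L_bil1[OF tens_bil])
lemma L_tens2: "is_vs V \<Longrightarrow> is_vs W \<Longrightarrow> v \<in> vcar V \<Longrightarrow> linear_map X W G \<Longrightarrow> linear_map X (tsp V W) (\<lambda>x. tens V W v (G x))"
  by (rule L_bil2[OF tens_bil])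
lemma L_tlift_param:
  fixes V :: "('k::field,'a) vs" and W :: "('k,'b) vs" and U :: "('k,'c) vs" and X :: "('k,'d) vs"
  assumes "is_vs V" "is_vs W" "is_vs U" "is_vs X" "t \<in> vcar (tsp V W)"
   "\<And>v w. v \<in> vcar V \<Longrightarrow> w \<in> vcar W \<Longrightarrow> linear_map X U (\<lambda>x. F x v w)" shows
   "linear_map X U (\<lambda>x. tlift U (F x) t)"
  by (rule lin_tlift_param[OF assms])
lemma L_tlift_arg: "is_vs V \<Longrightarrow> is_vs W \<Longrightarrow> is_vs U \<Longrightarrow> bilinear_map V W U K \<Longrightarrow> linear_map X (tsp V W) G \<Longrightarrow>
   linear_map X U (\<lambda>x. tlift U K (G x))"
  by (rule lin_comp[OF _ tlift_lin])
lemma C_tlift: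
  fixes V :: "('k::field,'a) vs" and W :: "('k,'b) vs" and U :: "('k,'c) vs"
  assumes "is_vs V" "is_vs W" "is_vs U" "t \<in> vcar (tsp V W)"
  "\<And>v w. v \<in> vcar V \<Longrightarrow> w \<in> vcar W \<Longrightarrow> F v w \<in> vcar U" shows "tlift U F t \<in> vcar U"
  by (rule tlift_closed[OF assms])

lemmas tsp_vs = tsp_is_vs


lemma tlift_tlift:
  fixes V :: "('k::field,'a) vs" and W :: "('k,'b) vs" and U :: "('k,'c) vs"
    and V' :: "('k,'d) vs" and W' :: "('k,'e) vs"
  assumes V: "is_vs V" "is_vs W" "is_vs V'" "is_vs W'" "is_vs U" and K: "bilinear_map V' W' U K"
    and t: "t \<in> vcar (tsp V W)"
    and G: "\<And>v w. v \<in> vcar V \<Longrightarrow> w \<in> vcar W \<Longrightarrow> G v w \<in> vcar (tsp V' W')"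
  shows "tlift U K (tlift (tsp V' W') G t) = tlift U (\<lambda>v w. tlift U K (G v w)) t"
  by (rule tlift_map[OF V(1,2) tsp_is_vs[OF V(3,4)] V(5) tlift_lin[OF V(3,4,5) K] t G])

lemma tlift_tmap:
  fixes V :: "('k::field,'a) vs" and W :: "('k,'b) vs" and U :: "('k,'c) vs"
    and V' :: "('k,'d) vs" and W' :: "('k,'e) vs"
  assumes V: "is_vs V" "is_vs W" "is_vs V'" "is_vs W'" "is_vs U" and K: "bilinear_map V' W' U K"
    and t: "t \<in> vcar (tsp V W)"
    and f: "\<And>v. v \<in> vcar V \<Longrightarrow> f v \<in> vcar V'" and g: "\<And>w. w \<in> vcar W \<Longrightarrow> g w \<in> vcar W'"
  shows "tlift U K (tmap V' W' f g t) = tlift U (\<lambda>v w. K (f v) (g w)) t"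
proof -
  have "tlift U K (tmap V' W' f g t) = tlift U (\<lambda>v w. tlift U K (tens V' W' (f v) (g w))) t"
    unfolding tmap_def by (rule tlift_tlift[OF V K t]) (simp add: f g tens_car[OF V(3,4)])
  also have "\<dots> = tlift U (\<lambda>v w. K (f v) (g w)) t"
    by (rule tlift_cong[OF V(1,2,5) t]) (simp add: f g tlift_tens[OF V(3,4,5) K])
  finally show ?thesis .
qed

lemma tmap_c:
  fixes V :: "('k::field,'a) vs" and W :: "('k,'b) vs" and V' :: "('k,'d) vs" and W' :: "('k,'e) vs"
  assumes V: "is_vs V" "is_vs W" "is_vs V'" "is_vs W'" and t: "t \<in> vcar (tsp V W)"
    and f: "\<And>v. v \<in> vcar V \<Longrightarrow> f v \<in> vcar V'" and g: "\<And>w. w \<in> vcar W \<Longrightarrow> g w \<in> vcar W'"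
  shows "tmap V' W' f g t \<in> vcar (tsp V' W')"
  unfolding tmap_def by (rule tlift_closed[OF V(1,2) tsp_is_vs[OF V(3,4)] t]) (simp add: f g tens_car[OF V(3,4)])

lemma tmap_bil:
  fixes V :: "('k::field,'a) vs" and W :: "('k,'b) vs" and V' :: "('k,'d) vs" and W' :: "('k,'e) vs"
  assumes V: "is_vs V" "is_vs W" "is_vs V'" "is_vs W'" and f: "linear_map V V' f" and g: "linear_map W W' g"
  shows "bilinear_map V W (tsp V' W') (\<lambda>v w. tens V' W' (f v) (g w))"
  by (rule bilI) (auto intro!: L_tens1 L_tens2 V f g linD(1)[OF f] linD(1)[OF g])

lemma tmap_tens:
  fixes V :: "('k::field,'a) vs" and W :: "('k,'b) vs" and V' :: "('k,'d) vs" and W' :: "('k,'e) vs"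
  assumes V: "is_vs V" "is_vs W" "is_vs V'" "is_vs W'" and f: "linear_map V V' f" and g: "linear_map W W' g"
    and v: "v \<in> vcar V" and w: "w \<in> vcar W"
  shows "tmap V' W' f g (tens V W v w) = tens V' W' (f v) (g w)"
  unfolding tmap_def by (rule tlift_tens[OF V(1,2) tsp_is_vs[OF V(3,4)] tmap_bil[OF V f g] v w])

lemma tmap_lin:
  fixes V :: "('k::field,'a) vs" and W :: "('k,'b) vs" and V' :: "('k,'d) vs" and W' :: "('k,'e) vs"
  assumes V: "is_vs V" "is_vs W" "is_vs V'" "is_vs W'" and f: "linear_map V V' f" and g: "linear_map W W' g"
  shows "linear_map (tsp V W) (tsp V' W') (tmap V' W' f g)"
  unfolding tmap_def by (rule tlift_lin[OF V(1,2) tsp_is_vs[OF V(3,4)] tmap_bil[OF V f g]])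

locale smash =
  fixes H :: "('k::field, 'h) vs" and A :: "('k, 'a) vs"
    and muH :: "'h \<Rightarrow> 'h \<Rightarrow> 'h" and De :: "'h \<Rightarrow> ('h \<times> 'h) list set" and alH :: "'h \<Rightarrow> 'h"
    and muA :: "'a \<Rightarrow> 'a \<Rightarrow> 'a" and alA :: "'a \<Rightarrow> 'a" and act :: "'h \<Rightarrow> 'a \<Rightarrow> 'a"
  assumes bialg: "hom_bialg H muH De alH"
    and modalg: "module_hom_alg H muH De alH A muA alA act"
    and bijH: "bij_betw alH (vcar H) (vcar H)"
    and bijA: "bij_betw alA (vcar A) (vcar A)"
begin

abbreviation "bH \<equiv> the_inv_into (vcar H) alH"
abbreviation "bA \<equiv> the_inv_into (vcar A) alA"

lemma H[simp]: "is_vs H" using bialg by (simp add: hom_bialg_def hom_assoc_def)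
lemma A[simp]: "is_vs A" using modalg by (simp add: module_hom_alg_def hom_assoc_def)

lemma muH_bil: "bilinear_map H H H muH" using bialg by (simp add: hom_bialg_def hom_assoc_def)
lemma alH_lin: "linear_map H H alH" using bialg by (simp add: hom_bialg_def hom_assoc_def)
lemma muA_bil: "bilinear_map A A A muA" using modalg by (simp add: module_hom_alg_def hom_assoc_def)
lemma alA_lin: "linear_map A A alA" using modalg by (simp add: module_hom_alg_def hom_assoc_def)
lemma act_bil: "bilinear_map H A A act" using modalg by (simp add: module_hom_alg_def)
lemma De_lin: "linear_map H (tsp H H) De" using bialg by (simp add: hom_bialg_def)

lemma muH_c[simp]: "x \<in> vcar H \<Longrightarrow> y \<in> vcar H \<Longrightarrow> muH x y \<in> vcar H" using bilD(1)[OF muH_bil] .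
lemma muA_c[simp]: "x \<in> vcar A \<Longrightarrow> y \<in> vcar A \<Longrightarrow> muA x y \<in> vcar A" using bilD(1)[OF muA_bil] .
lemma act_c[simp]: "x \<in> vcar H \<Longrightarrow> y \<in> vcar A \<Longrightarrow> act x y \<in> vcar A" using bilD(1)[OF act_bil] .
lemma alH_c[simp]: "x \<in> vcar H \<Longrightarrow> alH x \<in> vcar H" using linD(1)[OF alH_lin] .
lemma alA_c[simp]: "x \<in> vcar A \<Longrightarrow> alA x \<in> vcar A" using linD(1)[OF alA_lin] .
lemma De_c[simp]: "x \<in> vcar H \<Longrightarrow> De x \<in> vcar (tsp H H)" using linD(1)[OF De_lin] .

lemma bH_c[simp]: "x \<in> vcar H \<Longrightarrow> bH x \<in> vcar H"
  using bijH by (metis bij_betw_def bij_betw_the_inv_into bij_betwE)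
lemma bA_c[simp]: "x \<in> vcar A \<Longrightarrow> bA x \<in> vcar A"
  using bijA by (metis bij_betw_def bij_betw_the_inv_into bij_betwE)
lemma alH_bH[simp]: "x \<in> vcar H \<Longrightarrow> alH (bH x) = x"
  using bijH by (simp add: f_the_inv_into_f_bij_betw)
lemma alA_bA[simp]: "x \<in> vcar A \<Longrightarrow> alA (bA x) = x"
  using bijA by (simp add: f_the_inv_into_f_bij_betw)
lemma bH_alH[simp]: "x \<in> vcar H \<Longrightarrow> bH (alH x) = x"
  using bijH by (simp add: bij_betw_def the_inv_into_f_f)
lemma bA_alA[simp]: "x \<in> vcar A \<Longrightarrow> bA (alA x) = x"
  using bijA by (simp add: bij_betw_def the_inv_into_f_f)

lemma inv_lin:
  assumes V: "is_vs V" and f: "linear_map V V f" and b: "bij_betw f (vcar V) (vcar V)"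
  shows "linear_map V V (the_inv_into (vcar V) f)"
proof -
  let ?g = "the_inv_into (vcar V) f"
  have g: "x \<in> vcar V \<Longrightarrow> ?g x \<in> vcar V" for x using b by (metis bij_betw_def bij_betw_the_inv_into bij_betwE)
  have fg: "x \<in> vcar V \<Longrightarrow> f (?g x) = x" for x using b by (simp add: f_the_inv_into_f_bij_betw)
  have gf: "x \<in> vcar V \<Longrightarrow> ?g (f x) = x" for x using b by (simp add: bij_betw_def the_inv_into_f_f)
  show ?thesis
  proof (rule linI)
    fix x y assume x: "x \<in> vcar V" and y: "y \<in> vcar V"
    have "vadd V x y = f (vadd V (?g x) (?g y))" using linD(2)[OF f g[OF x] g[OF y]] fg x y by simp
    thus "?g (vadd V x y) = vadd V (?g x) (?g y)" using gf g x y vs_add[OF V] by metis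
  next
    fix c x assume x: "x \<in> vcar V"
    have "vsc V c x = f (vsc V c (?g x))" using linD(3)[OF f g[OF x]] fg x by simp
    thus "?g (vsc V c x) = vsc V c (?g x)" using gf g x vs_sc[OF V] by metis
  qed (rule g)
qed

lemma bH_lin: "linear_map H H bH" by (rule inv_lin[OF H alH_lin bijH])
lemma bA_lin: "linear_map A A bA" by (rule inv_lin[OF A alA_lin bijA])

lemmas L_muA1 = L_bil1[OF muA_bil] and L_muA2 = L_bil2[OF muA_bil]
lemmas L_muH1 = L_bil1[OF muH_bil] and L_muH2 = L_bil2[OF muH_bil]
lemmas L_act1 = L_bil1[OF act_bil] and L_act2 = L_bil2[OF act_bil]
lemmas L_alA = lin_comp[OF _ alA_lin] and L_alH = lin_comp[OF _ alH_lin]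
lemmas L_bA = lin_comp[OF _ bA_lin] and L_bH = lin_comp[OF _ bH_lin]
lemmas L_De = lin_comp[OF _ De_lin]

lemmas Lrules = L_id L_tens1 L_tens2 L_tlift_param L_tlift_arg L_muA1 L_muA2 L_muH1 L_muH2 L_act1 L_act2
  L_alA L_alH L_bA L_bH L_De bilI
lemmas Crules = C_tlift tens_car muH_c muA_c act_c alH_c alA_c bH_c bA_c De_c tsp_vs H A

lemma hom_assocH: "x \<in> vcar H \<Longrightarrow> y \<in> vcar H \<Longrightarrow> z \<in> vcar H \<Longrightarrow> muH (alH x) (muH y z) = muH (muH x y) (alH z)"
  using bialg by (simp add: hom_bialg_def hom_assoc_def)
lemma hom_assocA: "x \<in> vcar A \<Longrightarrow> y \<in> vcar A \<Longrightarrow> z \<in> vcar A \<Longrightarrow> muA (alA x) (muA y z) = muA (muA x y) (alA z)"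
  using modalg by (simp add: module_hom_alg_def hom_assoc_def)
lemma alH_mu[simp]: "x \<in> vcar H \<Longrightarrow> y \<in> vcar H \<Longrightarrow> alH (muH x y) = muH (alH x) (alH y)"
  using bialg by (simp add: hom_bialg_def hom_assoc_def)
lemma alA_mu[simp]: "x \<in> vcar A \<Longrightarrow> y \<in> vcar A \<Longrightarrow> alA (muA x y) = muA (alA x) (alA y)"
  using modalg by (simp add: module_hom_alg_def hom_assoc_def)
lemma alA_act[simp]: "h \<in> vcar H \<Longrightarrow> a \<in> vcar A \<Longrightarrow> alA (act h a) = act (alH h) (alA a)"
  using modalg by (simp add: module_hom_alg_def)
lemma act_act: "h \<in> vcar H \<Longrightarrow> h' \<in> vcar H \<Longrightarrow> a \<in> vcar A \<Longrightarrow> act (alH h) (act h' a) = act (muH h h') (alA a)"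
  using modalg by (simp add: module_hom_alg_def)
lemma act_mu: "h \<in> vcar H \<Longrightarrow> a \<in> vcar A \<Longrightarrow> a' \<in> vcar A \<Longrightarrow>
   act (alH (alH h)) (muA a a') = tlift A (\<lambda>x y. muA (act x a) (act y a')) (De h)"
  using modalg by (simp add: module_hom_alg_def)
lemma De_al: "h \<in> vcar H \<Longrightarrow> De (alH h) = tmap H H alH alH (De h)"
  using bialg by (simp add: hom_bialg_def)
lemma De_mu: "h \<in> vcar H \<Longrightarrow> h' \<in> vcar H \<Longrightarrow> De (muH h h') = tmul H H muH muH (De h) (De h')"
  using bialg by (simp add: hom_bialg_def)
lemma coassoc: "h \<in> vcar H \<Longrightarrow> tassoc H H H (tmap (tsp H H) H De alH (De h)) = tmap H (tsp H H) alH De (De h)"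
  using bialg by (simp add: hom_bialg_def)

lemma bH_mu[simp]: "x \<in> vcar H \<Longrightarrow> y \<in> vcar H \<Longrightarrow> bH (muH x y) = muH (bH x) (bH y)"
proof -
  assume x: "x \<in> vcar H" and y: "y \<in> vcar H"
  have e: "alH (muH (bH x) (bH y)) = muH x y" using x y by simp
  have "bH (alH (muH (bH x) (bH y))) = muH (bH x) (bH y)" using x y by (intro bH_alH) simp
  thus ?thesis unfolding e .
qed
lemma bA_mu[simp]: "x \<in> vcar A \<Longrightarrow> y \<in> vcar A \<Longrightarrow> bA (muA x y) = muA (bA x) (bA y)"
proof -
  assume x: "x \<in> vcar A" and y: "y \<in> vcar A"
  have e: "alA (muA (bA x) (bA y)) = muA x y" using x y by simp
  have "bA (alA (muA (bA x) (bA y))) = muA (bA x) (bA y)" using x y by (intro bA_alA) simp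
  thus ?thesis unfolding e .
qed
lemma bA_act[simp]: "h \<in> vcar H \<Longrightarrow> a \<in> vcar A \<Longrightarrow> bA (act h a) = act (bH h) (bA a)"
proof -
  assume x: "h \<in> vcar H" and y: "a \<in> vcar A"
  have e: "alA (act (bH h) (bA a)) = act h a" using x y by simp
  have "bA (alA (act (bH h) (bA a))) = act (bH h) (bA a)" using x y by (intro bA_alA) simp
  thus ?thesis unfolding e .
qed

lemma De_al_tl:
  fixes U :: "('k, 'u) vs"
  assumes U: "is_vs U" and K: "bilinear_map H H U K" and h: "h \<in> vcar H"
  shows "tlift U K (De (alH h)) = tlift U (\<lambda>x y. K (alH x) (alH y)) (De h)"
  unfolding De_al[OF h] by (rule tlift_tmap[OF H H H H U K De_c[OF h]]) auto

lemma De_bH_tl: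
  fixes U :: "('k, 'u) vs"
  assumes U: "is_vs U" and K: "bilinear_map H H U K" and h: "h \<in> vcar H"
  shows "tlift U K (De (bH h)) = tlift U (\<lambda>x y. K (bH x) (bH y)) (De h)"
proof -
  have K': "bilinear_map H H U (\<lambda>x y. K (bH x) (bH y))"
    by (rule bilI) (auto intro!: lin_comp[OF bH_lin bil_lin1[OF K]] lin_comp[OF bH_lin bil_lin2[OF K]])
  have "tlift U (\<lambda>x y. K (bH x) (bH y)) (De h) = tlift U (\<lambda>x y. K (bH x) (bH y)) (De (alH (bH h)))"
    using h by simp
  also have "\<dots> = tlift U (\<lambda>x y. K (bH (alH x)) (bH (alH y))) (De (bH h))"
    by (rule De_al_tl[OF U K']) (use h in simp)
  also have "\<dots> = tlift U K (De (bH h))"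
    by (rule tlift_cong[OF H H U De_c]) (use h in simp_all)
  finally show ?thesis ..
qed

lemma tmul_tl:
  fixes U :: "('k, 'u) vs"
  assumes U: "is_vs U" and K: "bilinear_map H H U K"
    and s: "s \<in> vcar (tsp H H)" and s': "s' \<in> vcar (tsp H H)"
  shows "tlift U K (tmul H H muH muH s s') = tlift U (\<lambda>d e. tlift U (\<lambda>d' e'. K (muH d d') (muH e e')) s') s"
proof -
  have "tlift U K (tmul H H muH muH s s')
     = tlift U (\<lambda>d e. tlift U K (tlift (tsp H H) (\<lambda>d' e'. tens H H (muH d d') (muH e e')) s')) s"
    unfolding tmul_def by (rule tlift_tlift[OF H H H H U K s]) (auto intro!: Crules s')
  also have "\<dots> = tlift U (\<lambda>d e. tlift U (\<lambda>d' e'. K (muH d d') (muH e e')) s') s"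
    apply (rule tlift_cong[OF H H U s])
    apply (subst tlift_tlift[OF H H H H U K s'])
     apply (auto intro!: Crules)[1]
    apply (rule tlift_cong[OF H H U s'])
    by (simp add: tlift_tens[OF H H U K])
  finally show ?thesis .
qed

abbreviation "D \<equiv> tsp A H"

definition Inner where
  "Inner a h a' h' = tlift D (\<lambda>x y. tens A H (muA a (act (bH (bH x)) (bA a'))) (muH (bH y) h')) (De h)"

lemma Inner_bil: "a \<in> vcar A \<Longrightarrow> h \<in> vcar H \<Longrightarrow> bilinear_map A H D (Inner a h)"
  unfolding Inner_def by (auto intro!: Lrules Crules)

end


context smash
begin

lemma coassoc_sw:
  fixes U :: "('k, 'u) vs"
  assumes U: "is_vs U" and h: "h \<in> vcar H"
    and G1: "\<And>q r. q \<in> vcar H \<Longrightarrow> r \<in> vcar H \<Longrightarrow> linear_map H U (\<lambda>p. G p q r)"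
    and G2: "\<And>p r. p \<in> vcar H \<Longrightarrow> r \<in> vcar H \<Longrightarrow> linear_map H U (\<lambda>q. G p q r)"
    and G3: "\<And>p q. p \<in> vcar H \<Longrightarrow> q \<in> vcar H \<Longrightarrow> linear_map H U (\<lambda>r. G p q r)"
  shows "tlift U (\<lambda>x y. tlift U (\<lambda>p q. G p q (alH y)) (De x)) (De h)
       = tlift U (\<lambda>x y. tlift U (\<lambda>u v. G (alH x) u v) (De y)) (De h)"
proof -
  have Gc: "\<And>p q r. p \<in> vcar H \<Longrightarrow> q \<in> vcar H \<Longrightarrow> r \<in> vcar H \<Longrightarrow> G p q r \<in> vcar U"
    using linD(1)[OF G1] by blast
  define K1 where "K1 = (\<lambda>x t. tlift U (\<lambda>u v. G x u v) t)"
  define K2 where "K2 = (\<lambda>s w. tlift U (\<lambda>p q. G p q w) s)"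
  have b23: "bilinear_map H H U (\<lambda>u v. G x u v)" if "x \<in> vcar H" for x
    using that by (intro bilI G2 G3)
  have b12: "bilinear_map H H U (\<lambda>p q. G p q w)" if "w \<in> vcar H" for w
    using that by (intro bilI G1 G2)
  have K1b: "bilinear_map H (tsp H H) U K1"
    unfolding K1_def
  proof (rule bilI)
    fix t assume t: "t \<in> vcar (tsp H H)"
    show "linear_map H U (\<lambda>x. tlift U (\<lambda>u v. G x u v) t)"
      by (rule L_tlift_param[OF H H U H t]) (rule G1)
  next
    fix x assume x: "x \<in> vcar H"
    show "linear_map (tsp H H) U (\<lambda>t. tlift U (\<lambda>u v. G x u v) t)"
      by (rule tlift_lin[OF H H U b23[OF x]])
  qed
  have K2b: "bilinear_map (tsp H H) H U K2"
    unfolding K2_def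
  proof (rule bilI)
    fix w assume w: "w \<in> vcar H"
    show "linear_map (tsp H H) U (\<lambda>s. tlift U (\<lambda>p q. G p q w) s)"
      by (rule tlift_lin[OF H H U b12[OF w]])
  next
    fix s assume s: "s \<in> vcar (tsp H H)"
    show "linear_map H U (\<lambda>w. tlift U (\<lambda>p q. G p q w) s)"
      by (rule L_tlift_param[OF H H U H s]) (rule G3)
  qed
  have HH: "is_vs (tsp H H)" by (rule tsp_is_vs[OF H H])
  have Z: "is_vs (tsp H (tsp H H))" by (rule tsp_is_vs[OF H HH])
  have key: "tlift U K1 (tassoc H H H e) = tlift U K2 e" if e: "e \<in> vcar (tsp (tsp H H) H)" for e
  proof -
    have "tlift U K1 (tassoc H H H e)
       = tlift U (\<lambda>x w. tlift U K1 (tlift (tsp H (tsp H H)) (\<lambda>u v. tens H (tsp H H) u (tens H H v w)) x)) e"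
      unfolding tassoc_def
      by (rule tlift_tlift[OF HH H H HH U K1b e]) (auto intro!: Crules)
    also have "\<dots> = tlift U (\<lambda>x w. tlift U (\<lambda>u v. tlift U K1 (tens H (tsp H H) u (tens H H v w))) x) e"
      by (rule tlift_cong[OF HH H U e], rule tlift_tlift[OF H H H HH U K1b]) (auto intro!: Crules)
    also have "\<dots> = tlift U (\<lambda>x w. tlift U (\<lambda>u v. G u v w) x) e"
    proof (rule tlift_cong[OF HH H U e], rule tlift_cong[OF H H U], goal_cases)
      case (2 x w u v)
      have "tlift U K1 (tens H (tsp H H) u (tens H H v w)) = K1 u (tens H H v w)"
        by (rule tlift_tens[OF H HH U K1b]) (use 2 in \<open>simp_all add: tens_car\<close>)
      also have "\<dots> = G u v w" unfolding K1_def
        by (rule tlift_tens[OF H H U b23]) (use 2 in simp_all)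
      finally show ?case .
    qed auto
    also have "\<dots> = tlift U K2 e" unfolding K2_def ..
    finally show ?thesis .
  qed
  have "tlift U (\<lambda>x y. tlift U (\<lambda>p q. G p q (alH y)) (De x)) (De h)
      = tlift U (\<lambda>x y. K2 (De x) (alH y)) (De h)" unfolding K2_def ..
  also have "\<dots> = tlift U K2 (tmap (tsp H H) H De alH (De h))"
    by (rule tlift_tmap[OF H H HH H U K2b, symmetric]) (use h in auto)
  also have "\<dots> = tlift U K1 (tassoc H H H (tmap (tsp H H) H De alH (De h)))"
    by (rule key[symmetric]) (rule tmap_c[OF H H HH H]; use h in auto)
  also have "\<dots> = tlift U K1 (tmap H (tsp H H) alH De (De h))" by (simp add: coassoc h)
  also have "\<dots> = tlift U (\<lambda>x y. K1 (alH x) (De y)) (De h)"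
    by (rule tlift_tmap[OF H H H HH U K1b]) (use h in auto)
  also have "\<dots> = tlift U (\<lambda>x y. tlift U (\<lambda>u v. G (alH x) u v) (De y)) (De h)" unfolding K1_def ..
  finally show ?thesis .
qed

end


context smash
begin

abbreviation "mu \<equiv> smash_mult A H muA alA muH De alH act"
abbreviation "aD \<equiv> tmap A H alA alH"
abbreviation "rho \<equiv> smash_rho A H alA De"
abbreviation "DH \<equiv> tsp D H"

lemma D[simp]: "is_vs D" by (rule tsp_is_vs[OF A H])
lemma DH[simp]: "is_vs DH" by (rule tsp_is_vs[OF D H])
lemma HH[simp]: "is_vs (tsp H H)" by (rule tsp_is_vs[OF H H])

lemma mu_eq: "mu t t' = tlift D (\<lambda>a h. tlift D (Inner a h) t') t"
  unfolding smash_mult_def Let_def Inner_def ..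

lemma Inner_c[simp]: "a \<in> vcar A \<Longrightarrow> h \<in> vcar H \<Longrightarrow> a' \<in> vcar A \<Longrightarrow> h' \<in> vcar H \<Longrightarrow> Inner a h a' h' \<in> vcar D"
  unfolding Inner_def by (auto intro!: Crules)

lemma Outer_bil: "t' \<in> vcar D \<Longrightarrow> bilinear_map A H D (\<lambda>a h. tlift D (Inner a h) t')"
  unfolding Inner_def by (auto intro!: Lrules Crules)

lemma mu_bil: "bilinear_map D D D mu"
  unfolding mu_eq
proof (rule bilI)
  fix t' assume t': "t' \<in> vcar D"
  show "linear_map D D (\<lambda>t. tlift D (\<lambda>a h. tlift D (Inner a h) t') t)"
    by (rule tlift_lin[OF A H D Outer_bil[OF t']])
next
  fix t assume t: "t \<in> vcar D"
  show "linear_map D D (\<lambda>t'. tlift D (\<lambda>a h. tlift D (Inner a h) t') t)"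
    by (rule L_tlift_param[OF A H D D t]) (rule tlift_lin[OF A H D Inner_bil])
qed

lemma mu_c[simp]: "x \<in> vcar D \<Longrightarrow> y \<in> vcar D \<Longrightarrow> mu x y \<in> vcar D" by (rule bilD(1)[OF mu_bil])

lemma mu_tens: "a \<in> vcar A \<Longrightarrow> h \<in> vcar H \<Longrightarrow> a' \<in> vcar A \<Longrightarrow> h' \<in> vcar H \<Longrightarrow>
   mu (tens A H a h) (tens A H a' h') = Inner a h a' h'"
  unfolding mu_eq
  by (simp add: tlift_tens[OF A H D Outer_bil] tlift_tens[OF A H D Inner_bil])

lemma aD_lin: "linear_map D D aD" by (rule tmap_lin[OF A H A H alA_lin alH_lin])
lemma aD_c[simp]: "x \<in> vcar D \<Longrightarrow> aD x \<in> vcar D" by (rule linD(1)[OF aD_lin])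
lemma aD_tens[simp]: "a \<in> vcar A \<Longrightarrow> h \<in> vcar H \<Longrightarrow> aD (tens A H a h) = tens A H (alA a) (alH h)"
  by (rule tmap_tens[OF A H A H alA_lin alH_lin])

definition RI where "RI a h = tlift DH (\<lambda>x y. tens D H (tens A H (alA a) x) y) (De h)"

lemma RI_bil: "bilinear_map A H DH RI"
  unfolding RI_def by (auto intro!: Lrules Crules)

lemma rho_eq: "rho t = tlift DH RI t"
  unfolding smash_rho_def RI_def ..

lemma rho_lin: "linear_map D DH rho" unfolding rho_eq by (rule tlift_lin[OF A H DH RI_bil])
lemma rho_c[simp]: "x \<in> vcar D \<Longrightarrow> rho x \<in> vcar DH" by (rule linD(1)[OF rho_lin])
lemma rho_tens: "a \<in> vcar A \<Longrightarrow> h \<in> vcar H \<Longrightarrow> rho (tens A H a h) = RI a h"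
  unfolding rho_eq by (rule tlift_tens[OF A H DH RI_bil])

lemmas L_mu1 = L_bil1[OF mu_bil] and L_mu2 = L_bil2[OF mu_bil]
lemmas L_aD = lin_comp[OF _ aD_lin] and L_rho = lin_comp[OF _ rho_lin]
lemmas Lrules2 = Lrules L_mu1 L_mu2 L_aD L_rho
lemmas Crules2 = Crules mu_c aD_c rho_c D DH HH Inner_c

lemma D_ext2:
  fixes X :: "('k, 'x) vs"
  assumes X: "is_vs X"
    and F1: "\<And>y. y \<in> vcar D \<Longrightarrow> linear_map D X (\<lambda>x. F x y)" and F2: "\<And>x. x \<in> vcar D \<Longrightarrow> linear_map D X (\<lambda>y. F x y)"
    and G1: "\<And>y. y \<in> vcar D \<Longrightarrow> linear_map D X (\<lambda>x. G x y)" and G2: "\<And>x. x \<in> vcar D \<Longrightarrow> linear_map D X (\<lambda>y. G x y)"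
    and e: "\<And>a h a' h'. a \<in> vcar A \<Longrightarrow> h \<in> vcar H \<Longrightarrow> a' \<in> vcar A \<Longrightarrow> h' \<in> vcar H \<Longrightarrow>
        F (tens A H a h) (tens A H a' h') = G (tens A H a h) (tens A H a' h')"
    and x: "x \<in> vcar D" and y: "y \<in> vcar D"
  shows "F x y = G x y"
proof -
  have "F (tens A H a h) y = G (tens A H a h) y" if "a \<in> vcar A" "h \<in> vcar H" for a h
    by (rule tsp_ext[OF A H X F2 G2 _ y]) (use that e in \<open>auto intro: tens_car\<close>)
  then show ?thesis
    by (intro tsp_ext[OF A H X F1[OF y] G1[OF y] _ x]) auto
qed

lemma D_ext3:
  fixes X :: "('k, 'x) vs"
  assumes X: "is_vs X"
    and F1: "\<And>y z. y \<in> vcar D \<Longrightarrow> z \<in> vcar D \<Longrightarrow> linear_map D X (\<lambda>x. F x y z)"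
    and F2: "\<And>x z. x \<in> vcar D \<Longrightarrow> z \<in> vcar D \<Longrightarrow> linear_map D X (\<lambda>y. F x y z)"
    and F3: "\<And>x y. x \<in> vcar D \<Longrightarrow> y \<in> vcar D \<Longrightarrow> linear_map D X (\<lambda>z. F x y z)"
    and G1: "\<And>y z. y \<in> vcar D \<Longrightarrow> z \<in> vcar D \<Longrightarrow> linear_map D X (\<lambda>x. G x y z)"
    and G2: "\<And>x z. x \<in> vcar D \<Longrightarrow> z \<in> vcar D \<Longrightarrow> linear_map D X (\<lambda>y. G x y z)"
    and G3: "\<And>x y. x \<in> vcar D \<Longrightarrow> y \<in> vcar D \<Longrightarrow> linear_map D X (\<lambda>z. G x y z)"
    and e: "\<And>a h a' h' a'' h''. a \<in> vcar A \<Longrightarrow> h \<in> vcar H \<Longrightarrow> a' \<in> vcar A \<Longrightarrow> h' \<in> vcar H \<Longrightarrow>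
        a'' \<in> vcar A \<Longrightarrow> h'' \<in> vcar H \<Longrightarrow>
        F (tens A H a h) (tens A H a' h') (tens A H a'' h'') = G (tens A H a h) (tens A H a' h') (tens A H a'' h'')"
    and x: "x \<in> vcar D" and y: "y \<in> vcar D" and z: "z \<in> vcar D"
  shows "F x y z = G x y z"
proof -
  have "F (tens A H a h) y z = G (tens A H a h) y z" if "a \<in> vcar A" "h \<in> vcar H" for a h
    by (rule D_ext2[OF X, where F="F (tens A H a h)" and G="G (tens A H a h)"])
       (use that e F2 F3 G2 G3 y z in \<open>auto intro: tens_car\<close>)
  then show ?thesis
    by (intro tsp_ext[OF A H X F1[OF y z] G1[OF y z] _ x]) auto
qed

lemma aD_Inner:
  assumes a: "a \<in> vcar A" and h: "h \<in> vcar H" and a': "a' \<in> vcar A" and h': "h' \<in> vcar H"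
  shows "aD (Inner a h a' h') = Inner (alA a) (alH h) (alA a') (alH h')"
proof -
  have "aD (Inner a h a' h') = tlift D (\<lambda>x y. aD (tens A H (muA a (act (bH (bH x)) (bA a'))) (muH (bH y) h'))) (De h)"
    unfolding Inner_def by (rule tlift_map[OF H H D D aD_lin]) (use a h a' h' in \<open>auto intro!: Crules\<close>)
  also have "\<dots> = tlift D (\<lambda>x y. tens A H (muA (alA a) (act (bH x) a')) (muH y (alH h'))) (De h)"
    by (rule tlift_cong[OF H H D]) (use a h a' h' in simp_all)
  also have "\<dots> = tlift D (\<lambda>x y. tens A H (muA (alA a) (act (bH (bH (alH x))) (bA (alA a')))) (muH (bH (alH y)) (alH h'))) (De h)"
    by (rule tlift_cong[OF H H D]) (use a h a' h' in simp_all)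
  also have "\<dots> = tlift D (\<lambda>x y. tens A H (muA (alA a) (act (bH (bH x)) (bA (alA a')))) (muH (bH y) (alH h'))) (De (alH h))"
    by (rule De_al_tl[symmetric]) (use a h a' h' in \<open>auto intro!: Lrules Crules\<close>)
  also have "\<dots> = Inner (alA a) (alH h) (alA a') (alH h')" unfolding Inner_def ..
  finally show ?thesis .
qed

lemma aD_mu: "x \<in> vcar D \<Longrightarrow> y \<in> vcar D \<Longrightarrow> aD (mu x y) = mu (aD x) (aD y)"
  by (rule D_ext2[OF D, where F="\<lambda>x y. aD (mu x y)" and G="\<lambda>x y. mu (aD x) (aD y)"])
     (auto intro!: Lrules2 Crules2 simp: mu_tens aD_Inner)

end


context smash
begin

lemma act_bH_mu:
  assumes u: "u \<in> vcar H" and c: "c \<in> vcar A" and d: "d \<in> vcar A"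
  shows "act (bH u) (muA c d) = tlift A (\<lambda>p q. muA (act (bH (bH (bH p))) c) (act (bH (bH (bH q))) d)) (De u)"
proof -
  have "act (bH u) (muA c d) = act (alH (alH (bH (bH (bH u))))) (muA c d)" using u by simp
  also have "\<dots> = tlift A (\<lambda>p q. muA (act p c) (act q d)) (De (bH (bH (bH u))))"
    by (rule act_mu) (use u c d in simp_all)
  also have "\<dots> = tlift A (\<lambda>p q. muA (act (bH p) c) (act (bH q) d)) (De (bH (bH u)))"
    by (rule De_bH_tl) (use u c d in \<open>auto intro!: Lrules Crules\<close>)
  also have "\<dots> = tlift A (\<lambda>p q. muA (act (bH (bH p)) c) (act (bH (bH q)) d)) (De (bH u))"
    by (rule De_bH_tl) (use u c d in \<open>auto intro!: Lrules Crules\<close>)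
  also have "\<dots> = tlift A (\<lambda>p q. muA (act (bH (bH (bH p))) c) (act (bH (bH (bH q))) d)) (De u)"
    by (rule De_bH_tl) (use u c d in \<open>auto intro!: Lrules Crules\<close>)
  finally show ?thesis .
qed

lemma act_comp: "k \<in> vcar H \<Longrightarrow> k' \<in> vcar H \<Longrightarrow> c \<in> vcar A \<Longrightarrow>
   act (bH k) (act k' c) = act (muH (bH (bH k)) k') (alA c)"
  using act_act[of "bH (bH k)" k' c] by simp

lemma muH_comp: "v \<in> vcar H \<Longrightarrow> y \<in> vcar H \<Longrightarrow> z \<in> vcar H \<Longrightarrow>
   muH v (muH y z) = muH (muH (bH v) y) (alH z)"
  using hom_assocH[of "bH v" y z] by simp

context
  fixes a h a' h' a'' h''
  assumes a: "a \<in> vcar A" and h: "h \<in> vcar H" and a': "a' \<in> vcar A" and h': "h' \<in> vcar H"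
    and a'': "a'' \<in> vcar A" and h'': "h'' \<in> vcar H"
begin

definition GG where
  "GG P Q R = tlift D (\<lambda>x y. tens A H (muA (muA a (act (bH (bH (bH P))) (bA a'))) (act (muH (bH (bH (bH Q))) (bH (bH x))) a''))
      (muH (muH (bH (bH R)) (bH y)) (alH h''))) (De h')"

lemma GG_c[simp]: "P \<in> vcar H \<Longrightarrow> Q \<in> vcar H \<Longrightarrow> R \<in> vcar H \<Longrightarrow> GG P Q R \<in> vcar D"
  unfolding GG_def using a h a' h' a'' h'' by (auto intro!: Crules)

lemma GG1: "Q \<in> vcar H \<Longrightarrow> R \<in> vcar H \<Longrightarrow> linear_map H D (\<lambda>P. GG P Q R)"
  unfolding GG_def using a h a' h' a'' h'' by (auto intro!: Lrules Crules)
lemma GG2: "P \<in> vcar H \<Longrightarrow> R \<in> vcar H \<Longrightarrow> linear_map H D (\<lambda>Q. GG P Q R)"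
  unfolding GG_def using a h a' h' a'' h'' by (auto intro!: Lrules Crules)
lemma GG3: "P \<in> vcar H \<Longrightarrow> Q \<in> vcar H \<Longrightarrow> linear_map H D (\<lambda>R. GG P Q R)"
  unfolding GG_def using a h a' h' a'' h'' by (auto intro!: Lrules Crules)

lemma pt_lhs:
  assumes p: "p \<in> vcar H" and q: "q \<in> vcar H" and v: "v \<in> vcar H" and x: "x \<in> vcar H" and y: "y \<in> vcar H"
  shows "tens A H (muA (alA a) (muA (act (bH (bH (bH p))) (bA a')) (act (bH (bH (bH q))) (act (bH (bH (bH x))) (bA (bA a''))))))
        (muH v (muH (bH y) h''))
    = tens A H (muA (muA a (act (bH (bH (bH p))) (bA a'))) (act (muH (bH (bH (bH q))) (bH (bH x))) a''))
      (muH (muH (bH v) (bH y)) (alH h''))"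
proof -
  let ?c = "bA a'" and ?d = "act (bH (bH (bH x))) (bA (bA a''))"
  have e1: "muA (alA a) (muA (act (bH (bH (bH p))) ?c) (act (bH (bH (bH q))) ?d))
     = muA (muA a (act (bH (bH (bH p))) ?c)) (alA (act (bH (bH (bH q))) ?d))"
    by (rule hom_assocA) (use p q a a' a'' x in simp_all)
  have e2: "alA (act (bH (bH (bH q))) ?d) = act (muH (bH (bH (bH q))) (bH (bH x))) a''"
  proof -
    have "alA (act (bH (bH (bH q))) ?d) = act (bH (bH q)) (act (bH (bH x)) (bA a''))"
      using q x a'' by simp
    also have "\<dots> = act (muH (bH (bH (bH q))) (bH (bH x))) (alA (bA a''))"
      by (rule act_comp) (use q x a'' in simp_all)
    finally show ?thesis using a'' by simp
  qed
  have e3: "muH v (muH (bH y) h'') = muH (muH (bH v) (bH y)) (alH h'')"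
    by (rule muH_comp) (use v y h'' in simp_all)
  show ?thesis unfolding e1 e2 e3 ..
qed

lemma tens_mu_tlift:
  assumes t: "t \<in> vcar (tsp H H)" and a0: "a0 \<in> vcar A" and w: "w \<in> vcar H"
    and F: "\<And>p q. p \<in> vcar H \<Longrightarrow> q \<in> vcar H \<Longrightarrow> F p q \<in> vcar A"
  shows "tens A H (muA a0 (tlift A F t)) w = tlift D (\<lambda>p q. tens A H (muA a0 (F p q)) w) t"
  by (rule tlift_map[OF H H A D, where L="\<lambda>z. tens A H (muA a0 z) w"])
     (use t a0 w F in \<open>auto intro!: Lrules Crules\<close>)

lemma lhs_inner:
  assumes x: "x \<in> vcar H" and y: "y \<in> vcar H"
  shows "Inner (alA a) (alH h) (muA a' (act (bH (bH x)) (bA a''))) (muH (bH y) h'')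
    = tlift D (\<lambda>u v. tlift D (\<lambda>p q. tens A H (muA (muA a (act (bH (bH (bH p))) (bA a'))) (act (muH (bH (bH (bH q))) (bH (bH x))) a''))
      (muH (muH (bH v) (bH y)) (alH h''))) (De u)) (De h)"
proof -
  let ?c = "bA a'" and ?d = "act (bH (bH (bH x))) (bA (bA a''))"
  have "Inner (alA a) (alH h) (muA a' (act (bH (bH x)) (bA a''))) (muH (bH y) h'')
     = tlift D (\<lambda>u v. tens A H (muA (alA a) (act (bH (bH (alH u))) (bA (muA a' (act (bH (bH x)) (bA a''))))))
           (muH (bH (alH v)) (muH (bH y) h''))) (De h)"
    unfolding Inner_def by (rule De_al_tl) (use a h a' h' a'' h'' x y in \<open>auto intro!: Lrules Crules\<close>)
  also have "\<dots> = tlift D (\<lambda>u v. tens A H (muA (alA a) (act (bH u) (muA ?c ?d))) (muH v (muH (bH y) h''))) (De h)"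
    by (rule tlift_cong[OF H H D]) (use a h a' h' a'' h'' x y in simp_all)
  also have "\<dots> = tlift D (\<lambda>u v. tens A H (muA (alA a) (tlift A (\<lambda>p q. muA (act (bH (bH (bH p))) ?c) (act (bH (bH (bH q))) ?d)) (De u)))
        (muH v (muH (bH y) h''))) (De h)"
    by (rule tlift_cong[OF H H D]) (use a h a' h' a'' h'' x y in \<open>simp_all add: act_bH_mu\<close>)
  also have "\<dots> = tlift D (\<lambda>u v. tlift D (\<lambda>p q. tens A H (muA (alA a) (muA (act (bH (bH (bH p))) ?c) (act (bH (bH (bH q))) ?d)))
        (muH v (muH (bH y) h''))) (De u)) (De h)"
    by (rule tlift_cong[OF H H D]) (use a h a' h' a'' h'' x y in \<open>simp_all add: tens_mu_tlift\<close>)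
  also have "\<dots> = tlift D (\<lambda>u v. tlift D (\<lambda>p q. tens A H (muA (muA a (act (bH (bH (bH p))) (bA a'))) (act (muH (bH (bH (bH q))) (bH (bH x))) a''))
      (muH (muH (bH v) (bH y)) (alH h''))) (De u)) (De h)"
    by (intro tlift_cong[OF H H D]) (use h x y in \<open>simp_all add: pt_lhs\<close>)
  finally show ?thesis .
qed

lemma lhs_full:
  "mu (tens A H (alA a) (alH h)) (Inner a' h' a'' h'') = tlift D (\<lambda>u v. tlift D (\<lambda>p q. GG p q (alH v)) (De u)) (De h)"
proof -
  let ?T = "\<lambda>p q v x y. tens A H (muA (muA a (act (bH (bH (bH p))) (bA a'))) (act (muH (bH (bH (bH q))) (bH (bH x))) a''))
      (muH (muH (bH v) (bH y)) (alH h''))"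
  have "mu (tens A H (alA a) (alH h)) (Inner a' h' a'' h'')
     = tlift D (\<lambda>x y. mu (tens A H (alA a) (alH h)) (tens A H (muA a' (act (bH (bH x)) (bA a''))) (muH (bH y) h''))) (De h')"
    unfolding Inner_def
    by (rule tlift_map[OF H H D D bil_lin2[OF mu_bil]]) (use a h a' h' a'' h'' in \<open>auto intro!: Crules\<close>)
  also have "\<dots> = tlift D (\<lambda>x y. Inner (alA a) (alH h) (muA a' (act (bH (bH x)) (bA a''))) (muH (bH y) h'')) (De h')"
    by (rule tlift_cong[OF H H D]) (use a h a' h' a'' h'' in \<open>simp_all add: mu_tens\<close>)
  also have "\<dots> = tlift D (\<lambda>x y. tlift D (\<lambda>u v. tlift D (\<lambda>p q. ?T p q v x y) (De u)) (De h)) (De h')"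
    by (rule tlift_cong[OF H H D]) (use h' in \<open>simp_all add: lhs_inner\<close>)
  also have "\<dots> = tlift D (\<lambda>u v. tlift D (\<lambda>x y. tlift D (\<lambda>p q. ?T p q v x y) (De u)) (De h')) (De h)"
    by (rule tlift_swap[OF H H H H D]) (use a h a' h' a'' h'' in \<open>auto intro!: Crules\<close>)
  also have "\<dots> = tlift D (\<lambda>u v. tlift D (\<lambda>p q. tlift D (\<lambda>x y. ?T p q v x y) (De h')) (De u)) (De h)"
  proof (rule tlift_cong[OF H H D], goal_cases)
    case (2 u v)
    show ?case
      by (rule tlift_swap[OF H H H H D]) (use 2 a h a' h' a'' h'' in \<open>auto intro!: Crules\<close>)
  qed (use h in simp)
  also have "\<dots> = tlift D (\<lambda>u v. tlift D (\<lambda>p q. GG p q (alH v)) (De u)) (De h)"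
    by (intro tlift_cong[OF H H D]) (use h in \<open>simp_all add: GG_def\<close>)
  finally show ?thesis .
qed

lemma rhs_inner:
  assumes u: "u \<in> vcar H" and v: "v \<in> vcar H"
  shows "Inner (muA a (act (bH (bH u)) (bA a'))) (muH (bH v) h') (alA a'') (alH h'')
     = tlift D (\<lambda>d e. GG (alH u) d e) (De v)"
proof -
  let ?A1 = "muA a (act (bH (bH u)) (bA a'))"
  let ?K = "\<lambda>s r. tens A H (muA ?A1 (act (bH (bH s)) (bA (alA a'')))) (muH (bH r) (alH h''))"
  have K: "bilinear_map H H D ?K" using a a' a'' h'' u by (auto intro!: Lrules Crules)
  have "Inner ?A1 (muH (bH v) h') (alA a'') (alH h'') = tlift D ?K (tmul H H muH muH (De (bH v)) (De h'))"
    unfolding Inner_def using v h' by (simp add: De_mu)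
  also have "\<dots> = tlift D (\<lambda>d e. tlift D (\<lambda>d' e'. ?K (muH d d') (muH e e')) (De h')) (De (bH v))"
    by (rule tmul_tl[OF D K]) (use v h' in simp_all)
  also have "\<dots> = tlift D (\<lambda>d e. tlift D (\<lambda>d' e'. ?K (muH (bH d) d') (muH (bH e) e')) (De h')) (De v)"
    by (rule De_bH_tl[OF D _ v]) (use a a' a'' h' h'' u in \<open>auto intro!: Lrules Crules\<close>)
  also have "\<dots> = tlift D (\<lambda>d e. GG (alH u) d e) (De v)"
    unfolding GG_def by (intro tlift_cong[OF H H D]) (use a a' a'' h' h'' u v in simp_all)
  finally show ?thesis .
qed

lemma rhs_full:
  "mu (Inner a h a' h') (tens A H (alA a'') (alH h'')) = tlift D (\<lambda>u v. tlift D (\<lambda>d e. GG (alH u) d e) (De v)) (De h)"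
proof -
  have "mu (Inner a h a' h') (tens A H (alA a'') (alH h''))
     = tlift D (\<lambda>u v. mu (tens A H (muA a (act (bH (bH u)) (bA a'))) (muH (bH v) h')) (tens A H (alA a'') (alH h''))) (De h)"
    unfolding Inner_def
    by (rule tlift_map[OF H H D D bil_lin1[OF mu_bil]]) (use a h a' h' a'' h'' in \<open>auto intro!: Crules\<close>)
  also have "\<dots> = tlift D (\<lambda>u v. Inner (muA a (act (bH (bH u)) (bA a'))) (muH (bH v) h') (alA a'') (alH h'')) (De h)"
    by (rule tlift_cong[OF H H D]) (use a h a' h' a'' h'' in \<open>simp_all add: mu_tens\<close>)
  also have "\<dots> = tlift D (\<lambda>u v. tlift D (\<lambda>d e. GG (alH u) d e) (De v)) (De h)"
    by (rule tlift_cong[OF H H D]) (use h in \<open>simp_all add: rhs_inner\<close>)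
  finally show ?thesis .
qed

lemma assoc_simple:
  "mu (aD (tens A H a h)) (mu (tens A H a' h') (tens A H a'' h'')) = mu (mu (tens A H a h) (tens A H a' h')) (aD (tens A H a'' h''))"
proof -
  have "mu (aD (tens A H a h)) (mu (tens A H a' h') (tens A H a'' h'')) = mu (tens A H (alA a) (alH h)) (Inner a' h' a'' h'')"
    using a h a' h' a'' h'' by (simp add: mu_tens)
  also have "\<dots> = tlift D (\<lambda>u v. tlift D (\<lambda>p q. GG p q (alH v)) (De u)) (De h)" by (rule lhs_full)
  also have "\<dots> = tlift D (\<lambda>u v. tlift D (\<lambda>d e. GG (alH u) d e) (De v)) (De h)"
    by (rule coassoc_sw[OF D h GG1 GG2 GG3])
  also have "\<dots> = mu (Inner a h a' h') (tens A H (alA a'') (alH h''))" by (rule rhs_full[symmetric])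
  also have "\<dots> = mu (mu (tens A H a h) (tens A H a' h')) (aD (tens A H a'' h''))"
    using a h a' h' a'' h'' by (simp add: mu_tens)
  finally show ?thesis .
qed

end

end


context smash
begin

lemma D_hom_assoc: "x \<in> vcar D \<Longrightarrow> y \<in> vcar D \<Longrightarrow> z \<in> vcar D \<Longrightarrow> mu (aD x) (mu y z) = mu (mu x y) (aD z)"
  by (rule D_ext3[OF D, where F="\<lambda>x y z. mu (aD x) (mu y z)" and G="\<lambda>x y z. mu (mu x y) (aD z)"])
     (auto intro!: Lrules2 Crules2 simp del: aD_tens simp: assoc_simple)

lemma D_hom_alg: "hom_assoc D mu aD"
  unfolding hom_assoc_def using mu_bil aD_lin aD_mu D_hom_assoc by auto

lemma RI_c[simp]: "a \<in> vcar A \<Longrightarrow> h \<in> vcar H \<Longrightarrow> RI a h \<in> vcar DH"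
  by (rule bilD(1)[OF RI_bil])

lemma rho_aD: "m \<in> vcar D \<Longrightarrow> tmap D H aD alH (rho m) = rho (aD m)"
proof (rule tsp_ext[OF A H DH, where g="\<lambda>m. tmap D H aD alH (rho m)" and g'="\<lambda>m. rho (aD m)"])
  show "linear_map D DH (\<lambda>m. tmap D H aD alH (rho m))"
    by (rule lin_comp[OF rho_lin tmap_lin[OF D H D H aD_lin alH_lin]])
  show "linear_map D DH (\<lambda>m. rho (aD m))" by (rule lin_comp[OF aD_lin rho_lin])
next
  fix a h assume a: "a \<in> vcar A" and h: "h \<in> vcar H"
  have "tmap D H aD alH (rho (tens A H a h)) = tmap D H aD alH (tlift DH (\<lambda>x y. tens D H (tens A H (alA a) x) y) (De h))"
    using a h by (simp add: rho_tens RI_def)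
  also have "\<dots> = tlift DH (\<lambda>x y. tmap D H aD alH (tens D H (tens A H (alA a) x) y)) (De h)"
    by (rule tlift_map[OF H H DH DH tmap_lin[OF D H D H aD_lin alH_lin]]) (use a h in \<open>auto intro!: Crules2\<close>)
  also have "\<dots> = tlift DH (\<lambda>x y. tens D H (tens A H (alA (alA a)) (alH x)) (alH y)) (De h)"
    by (rule tlift_cong[OF H H DH]) (use a h in \<open>simp_all add: tmap_tens[OF D H D H aD_lin alH_lin]\<close>)
  also have "\<dots> = tlift DH (\<lambda>x y. tens D H (tens A H (alA (alA a)) x) y) (De (alH h))"
    by (rule De_al_tl[symmetric]) (use a h in \<open>auto intro!: Lrules2 Crules2\<close>)
  also have "\<dots> = rho (aD (tens A H a h))" using a h by (simp add: rho_tens RI_def)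
  finally show "tmap D H aD alH (rho (tens A H a h)) = rho (aD (tens A H a h))" .
qed

abbreviation "Z \<equiv> tsp D (tsp H H)"
lemma Z[simp]: "is_vs Z" by (rule tsp_is_vs[OF D HH])
lemma DHH[simp]: "is_vs (tsp DH H)" by (rule tsp_is_vs[OF DH H])

lemma tassoc_inner_bil: "bilinear_map DH H Z (\<lambda>x w. tlift Z (\<lambda>u v. tens D (tsp H H) u (tens H H v w)) x)"
  by (auto intro!: Lrules2 Crules2)

lemma tassoc_lin: "linear_map (tsp DH H) Z (tassoc D H H)"
  unfolding tassoc_def by (rule tlift_lin[OF DH H Z tassoc_inner_bil])

lemma tassoc_tens: "s \<in> vcar DH \<Longrightarrow> w \<in> vcar H \<Longrightarrow>
  tassoc D H H (tens DH H s w) = tlift Z (\<lambda>u v. tens D (tsp H H) u (tens H H v w)) s"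
  unfolding tassoc_def by (rule tlift_tens[OF DH H Z tassoc_inner_bil])

lemma tens_De_expand: "c \<in> vcar D \<Longrightarrow> y \<in> vcar H \<Longrightarrow>
   tens D (tsp H H) c (De y) = tlift Z (\<lambda>u v. tens D (tsp H H) c (tens H H u v)) (De y)"
proof -
  assume c: "c \<in> vcar D" and y: "y \<in> vcar H"
  have "tens D (tsp H H) c (De y) = tens D (tsp H H) c (tlift (tsp H H) (tens H H) (De y))"
    using tlift_tens_id[OF H H De_c[OF y]] by simp
  also have "\<dots> = tlift Z (\<lambda>u v. tens D (tsp H H) c (tens H H u v)) (De y)"
    by (rule tlift_map[OF H H HH Z]) (use c y in \<open>auto intro!: Lrules2 Crules2\<close>)
  finally show ?thesis .
qed

lemma comod_coassoc: "m \<in> vcar D \<Longrightarrow> tmap D (tsp H H) aD De (rho m) = tassoc D H H (tmap DH H rho alH (rho m))"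
proof (rule tsp_ext[OF A H Z, where g="\<lambda>m. tmap D (tsp H H) aD De (rho m)" and g'="\<lambda>m. tassoc D H H (tmap DH H rho alH (rho m))"])
  show "linear_map D Z (\<lambda>m. tmap D (tsp H H) aD De (rho m))"
    by (rule lin_comp[OF rho_lin tmap_lin[OF D H D HH aD_lin De_lin]])
  show "linear_map D Z (\<lambda>m. tassoc D H H (tmap DH H rho alH (rho m)))"
    by (rule lin_comp[OF lin_comp[OF rho_lin tmap_lin[OF D H DH H rho_lin alH_lin]] tassoc_lin])
next
  fix a h assume a: "a \<in> vcar A" and h: "h \<in> vcar H"
  define G where "G = (\<lambda>p q r. tens D (tsp H H) (tens A H (alA (alA a)) p) (tens H H q r))"
  have G1: "linear_map H Z (\<lambda>p. G p q r)" if "q \<in> vcar H" "r \<in> vcar H" for q r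
    unfolding G_def using a that by (auto intro!: Lrules2 Crules2)
  have G2: "linear_map H Z (\<lambda>q. G p q r)" if "p \<in> vcar H" "r \<in> vcar H" for p r
    unfolding G_def using a that by (auto intro!: Lrules2 Crules2)
  have G3: "linear_map H Z (\<lambda>r. G p q r)" if "p \<in> vcar H" "q \<in> vcar H" for p q
    unfolding G_def using a that by (auto intro!: Lrules2 Crules2)
  have "tmap D (tsp H H) aD De (rho (tens A H a h))
     = tmap D (tsp H H) aD De (tlift DH (\<lambda>x y. tens D H (tens A H (alA a) x) y) (De h))"
    using a h by (simp add: rho_tens RI_def)
  also have "\<dots> = tlift Z (\<lambda>x y. tmap D (tsp H H) aD De (tens D H (tens A H (alA a) x) y)) (De h)"
    by (rule tlift_map[OF H H DH Z tmap_lin[OF D H D HH aD_lin De_lin]]) (use a h in \<open>auto intro!: Crules2\<close>)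
  also have "\<dots> = tlift Z (\<lambda>x y. tens D (tsp H H) (tens A H (alA (alA a)) (alH x)) (De y)) (De h)"
    by (rule tlift_cong[OF H H Z]) (use a h in \<open>simp_all add: tmap_tens[OF D H D HH aD_lin De_lin]\<close>)
  also have "\<dots> = tlift Z (\<lambda>x y. tlift Z (\<lambda>u v. G (alH x) u v) (De y)) (De h)"
    unfolding G_def by (rule tlift_cong[OF H H Z]) (use a h in \<open>simp_all add: tens_De_expand\<close>)
  also have "\<dots> = tlift Z (\<lambda>x y. tlift Z (\<lambda>p q. G p q (alH y)) (De x)) (De h)"
    by (rule coassoc_sw[OF Z h G1 G2 G3, symmetric])
  also have "\<dots> = tlift Z (\<lambda>x y. tassoc D H H (tens DH H (RI (alA a) x) (alH y))) (De h)"
  proof (rule tlift_cong[OF H H Z], goal_cases)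
    case (2 x y)
    have "tassoc D H H (tens DH H (RI (alA a) x) (alH y))
       = tlift Z (\<lambda>u v. tens D (tsp H H) u (tens H H v (alH y))) (RI (alA a) x)"
      by (rule tassoc_tens) (use 2 a in simp_all)
    also have "\<dots> = tlift Z (\<lambda>p q. tlift Z (\<lambda>u v. tens D (tsp H H) u (tens H H v (alH y))) (tens D H (tens A H (alA (alA a)) p) q)) (De x)"
      unfolding RI_def
      by (rule tlift_tlift[OF H H D H Z]) (use 2 a in \<open>auto intro!: Lrules2 Crules2\<close>)
    also have "\<dots> = tlift Z (\<lambda>p q. G p q (alH y)) (De x)"
      unfolding G_def
    proof (rule tlift_cong[OF H H Z], goal_cases)
      case (2 p q)
      show ?case by (rule tlift_tens[OF D H Z]) (use 2 a `y \<in> vcar H` in \<open>auto intro!: Lrules2 Crules2\<close>)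
    qed (use 2 in simp)
    finally show ?case ..
  qed (use h in simp)
  also have "\<dots> = tassoc D H H (tlift (tsp DH H) (\<lambda>x y. tens DH H (RI (alA a) x) (alH y)) (De h))"
    by (rule tlift_map[OF H H DHH Z tassoc_lin, symmetric]) (use a h in \<open>auto intro!: Crules2\<close>)
  also have "\<dots> = tassoc D H H (tmap DH H rho alH (rho (tens A H a h)))"
  proof -
    have "tmap DH H rho alH (rho (tens A H a h)) = tmap DH H rho alH (tlift DH (\<lambda>x y. tens D H (tens A H (alA a) x) y) (De h))"
      using a h by (simp add: rho_tens RI_def)
    also have "\<dots> = tlift (tsp DH H) (\<lambda>x y. tmap DH H rho alH (tens D H (tens A H (alA a) x) y)) (De h)"
      by (rule tlift_map[OF H H DH DHH tmap_lin[OF D H DH H rho_lin alH_lin]]) (use a h in \<open>auto intro!: Crules2\<close>)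
    also have "\<dots> = tlift (tsp DH H) (\<lambda>x y. tens DH H (RI (alA a) x) (alH y)) (De h)"
      by (rule tlift_cong[OF H H DHH]) (use a h in \<open>simp_all add: tmap_tens[OF D H DH H rho_lin alH_lin] rho_tens\<close>)
    finally show ?thesis by simp
  qed
  finally show "tmap D (tsp H H) aD De (rho (tens A H a h)) = tassoc D H H (tmap DH H rho alH (rho (tens A H a h)))" .
qed

context
  fixes a h a' h'
  assumes a: "a \<in> vcar A" and h: "h \<in> vcar H" and a': "a' \<in> vcar A" and h': "h' \<in> vcar H"
begin

definition GR where
  "GR P Q R = tlift DH (\<lambda>x' y'. tens D H (tens A H (muA (alA a) (act (bH (bH P)) a')) (muH (bH Q) x')) (muH (bH R) y')) (De h')"

lemma GR1: "Q \<in> vcar H \<Longrightarrow> R \<in> vcar H \<Longrightarrow> linear_map H DH (\<lambda>P. GR P Q R)"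
  unfolding GR_def using a h a' h' by (auto intro!: Lrules2 Crules2)
lemma GR2: "P \<in> vcar H \<Longrightarrow> R \<in> vcar H \<Longrightarrow> linear_map H DH (\<lambda>Q. GR P Q R)"
  unfolding GR_def using a h a' h' by (auto intro!: Lrules2 Crules2)
lemma GR3: "P \<in> vcar H \<Longrightarrow> Q \<in> vcar H \<Longrightarrow> linear_map H DH (\<lambda>R. GR P Q R)"
  unfolding GR_def using a h a' h' by (auto intro!: Lrules2 Crules2)

lemma rho_mu_lhs:
  "rho (mu (tens A H a h) (tens A H a' h')) = tlift DH (\<lambda>x y. tlift DH (\<lambda>d e. GR (alH x) d e) (De y)) (De h)"
proof -
  have "rho (mu (tens A H a h) (tens A H a' h'))
     = tlift DH (\<lambda>x y. rho (tens A H (muA a (act (bH (bH x)) (bA a'))) (muH (bH y) h'))) (De h)"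
    unfolding mu_tens[OF a h a' h'] Inner_def
    by (rule tlift_map[OF H H D DH rho_lin]) (use a h a' h' in \<open>auto intro!: Crules2\<close>)
  also have "\<dots> = tlift DH (\<lambda>x y. tlift DH (\<lambda>d e. GR (alH x) d e) (De y)) (De h)"
  proof (rule tlift_cong[OF H H DH], goal_cases)
    case (2 x y)
    let ?K = "\<lambda>s r. tens D H (tens A H (alA (muA a (act (bH (bH x)) (bA a')))) s) r"
    have K: "bilinear_map H H DH ?K" using 2 a a' by (auto intro!: Lrules2 Crules2)
    have "rho (tens A H (muA a (act (bH (bH x)) (bA a'))) (muH (bH y) h'))
       = tlift DH ?K (tmul H H muH muH (De (bH y)) (De h'))"
      using 2 a a' h' by (simp add: rho_tens RI_def De_mu)
    also have "\<dots> = tlift DH (\<lambda>d e. tlift DH (\<lambda>d' e'. ?K (muH d d') (muH e e')) (De h')) (De (bH y))"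
      by (rule tmul_tl[OF DH K]) (use 2 h' in simp_all)
    also have "\<dots> = tlift DH (\<lambda>d e. tlift DH (\<lambda>d' e'. ?K (muH (bH d) d') (muH (bH e) e')) (De h')) (De y)"
      by (rule De_bH_tl[OF DH]) (use 2 a a' h' in \<open>auto intro!: Lrules2 Crules2\<close>)
    also have "\<dots> = tlift DH (\<lambda>d e. GR (alH x) d e) (De y)"
      unfolding GR_def by (intro tlift_cong[OF H H DH]) (use 2 a a' h' in simp_all)
    finally show ?case .
  qed (use h in simp)
  finally show ?thesis .
qed

lemma rho_mu_rhs:
  "tmul D H mu muH (rho (tens A H a h)) (rho (tens A H a' h')) = tlift DH (\<lambda>x y. tlift DH (\<lambda>p q. GR p q (alH y)) (De x)) (De h)"
proof -
  let ?Phi = "\<lambda>d e. tlift DH (\<lambda>d' e'. tens D H (mu d d') (muH e e')) (RI a' h')"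
  have Phi: "bilinear_map D H DH ?Phi" using a' h' by (auto intro!: Lrules2 Crules2)
  have "tmul D H mu muH (rho (tens A H a h)) (rho (tens A H a' h')) = tlift DH ?Phi (tlift DH (\<lambda>x y. tens D H (tens A H (alA a) x) y) (De h))"
    using a h a' h' by (simp add: tmul_def rho_tens RI_def[of a h])
  also have "\<dots> = tlift DH (\<lambda>x y. tlift DH ?Phi (tens D H (tens A H (alA a) x) y)) (De h)"
    by (rule tlift_tlift[OF H H D H DH Phi]) (use a h in \<open>auto intro!: Crules2\<close>)
  also have "\<dots> = tlift DH (\<lambda>x y. ?Phi (tens A H (alA a) x) y) (De h)"
    by (rule tlift_cong[OF H H DH]) (use a h in \<open>simp_all add: tlift_tens[OF D H DH Phi]\<close>)
  also have "\<dots> = tlift DH (\<lambda>x y. tlift DH (\<lambda>p q. GR p q (alH y)) (De x)) (De h)"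
  proof (rule tlift_cong[OF H H DH], goal_cases)
    case (2 x y)
    let ?Psi = "\<lambda>d' e'. tens D H (mu (tens A H (alA a) x) d') (muH y e')"
    have Psi: "bilinear_map D H DH ?Psi" using 2 a by (auto intro!: Lrules2 Crules2)
    have "?Phi (tens A H (alA a) x) y = tlift DH ?Psi (tlift DH (\<lambda>x' y'. tens D H (tens A H (alA a') x') y') (De h'))"
      by (simp add: RI_def)
    also have "\<dots> = tlift DH (\<lambda>x' y'. tlift DH ?Psi (tens D H (tens A H (alA a') x') y')) (De h')"
      by (rule tlift_tlift[OF H H D H DH Psi]) (use a' h' in \<open>auto intro!: Crules2\<close>)
    also have "\<dots> = tlift DH (\<lambda>x' y'. tens D H (Inner (alA a) x (alA a') x') (muH y y')) (De h')"
      by (rule tlift_cong[OF H H DH]) (use 2 a a' h' in \<open>simp_all add: tlift_tens[OF D H DH Psi] mu_tens\<close>)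
    also have "\<dots> = tlift DH (\<lambda>x' y'. tlift DH (\<lambda>p q. tens D H (tens A H (muA (alA a) (act (bH (bH p)) (bA (alA a')))) (muH (bH q) x')) (muH y y')) (De x)) (De h')"
    proof (rule tlift_cong[OF H H DH], goal_cases)
      case (2 x' y')
      show ?case unfolding Inner_def
        by (rule tlift_map[OF H H D DH, where L="\<lambda>z. tens D H z (muH y y')"])
           (use 2 `x \<in> vcar H` `y \<in> vcar H` a a' in \<open>auto intro!: Lrules2 Crules2\<close>)
    qed (use h' in simp)
    also have "\<dots> = tlift DH (\<lambda>p q. tlift DH (\<lambda>x' y'. tens D H (tens A H (muA (alA a) (act (bH (bH p)) (bA (alA a')))) (muH (bH q) x')) (muH y y')) (De h')) (De x)"
      by (rule tlift_swap[OF H H H H DH]) (use 2 a a' h' in \<open>auto intro!: Crules2\<close>)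
    also have "\<dots> = tlift DH (\<lambda>p q. GR p q (alH y)) (De x)"
      unfolding GR_def by (intro tlift_cong[OF H H DH]) (use 2 a a' h' in simp_all)
    finally show ?case .
  qed (use h in simp)
  finally show ?thesis .
qed

lemma rho_mu_simple:
  "rho (mu (tens A H a h) (tens A H a' h')) = tmul D H mu muH (rho (tens A H a h)) (rho (tens A H a' h'))"
  unfolding rho_mu_lhs rho_mu_rhs by (rule coassoc_sw[OF DH h GR1 GR2 GR3, symmetric])

end

lemma rho_mu: "x \<in> vcar D \<Longrightarrow> y \<in> vcar D \<Longrightarrow> rho (mu x y) = tmul D H mu muH (rho x) (rho y)"
  by (rule D_ext2[OF DH, where F="\<lambda>x y. rho (mu x y)" and G="\<lambda>x y. tmul D H mu muH (rho x) (rho y)"])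
     (auto intro!: Lrules2 Crules2 simp: tmul_def[symmetric] rho_mu_simple, auto intro!: Lrules2 Crules2 simp: tmul_def)

end


theorem proposition3p6:
  fixes H :: "('k::field, 'h) vs" and A :: "('k, 'a) vs"
    and muH :: "'h \<Rightarrow> 'h \<Rightarrow> 'h" and De :: "'h \<Rightarrow> ('h \<times> 'h) list set" and alH :: "'h \<Rightarrow> 'h"
    and muA :: "'a \<Rightarrow> 'a \<Rightarrow> 'a" and alA :: "'a \<Rightarrow> 'a" and act :: "'h \<Rightarrow> 'a \<Rightarrow> 'a"
  assumes "hom_bialg H muH De alH"
    and "module_hom_alg H muH De alH A muA alA act"
    and "bij_betw alH (vcar H) (vcar H)"
    and "bij_betw alA (vcar A) (vcar A)"
  shows "comodule_hom_alg (tsp A H) (smash_mult A H muA alA muH De alH act) (tmap A H alA alH)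
           H muH De alH (smash_rho A H alA De)"
proof -
  interpret smash H A muH De alH muA alA act by (rule smash.intro) (fact assms)+
  show ?thesis
    unfolding comodule_hom_alg_def comodule_def hom_alg_mor_def
    using D_hom_alg rho_lin rho_aD comod_coassoc rho_mu by auto
qed


end
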